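(* Let $f:\mathcal{WH}^\circ\to\mathcal{WBH}^\circ$ be a homotopy equivalence with homotopy inverse $g:\mathcal{WBH}^\circ\to\mathcal{WH}^\circ$. Then $f(hf(\mathcal{WH}^\circ))\subset hf(\mathcal{WBH}^\circ)$ and $g(hf(\mathcal{WBH}^\circ))\subset hf(\mathcal{WH}^\circ)$. The same inclusions hold for any homotopy equivalence $f:\mathcal{WH}\to\mathcal{WBH}$ with homotopy inverse $g$.
   Context: $hf(X)$ is the set of points $x\in X$ with $h_t(x)=x$ for all $t$ for every homotopy $h_t:X\to X$ with $h_0=\mathrm{id}_X$. Double broom $\mathcal{B}\subset\mathbb{R}^2$: $v=(0,0)$, $a_0=(0,1)$, $b_0=(0,-1)$, $a_n=(1/n,0)$, $b_n=(-1/n,0)$ ($n\ge1$), $\mathcal{B}=[v,a_0]\cup[v,b_0]\cup\bigcup_{n\ge1}([a_n,a_0]\cup[b_n,b_0])$ with center $v$. Hairy disk $\mathcal{H}$: the closed unit disk $D^2$ with center $c$, a countable dense subset $M=\{m_i\}$ of $\partial D^2$, and for each $i$ a copy $\mathcal{B}_{m_i}$ of $\mathcal{B}$ attached by its center at $m_i$, pairwise disjoint, meeting $D^2$ only in $m_i$, diameters tending to $0$. For disjoint $X,Y\subset\mathbb{R}^N$, $X\curlyvee_{x,y}Y=X\cup[x,y]\cup Y$ with $[x,y]$ an arc from $x\in X$ to $y\in Y$ whose interior misses $X\cup Y$. With $c(k)=(-1/k,0,0)$ and $\mathcal{H}(k)$ a copy of $\mathcal{H}$ of diameter $1/k$ in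 the plane $\{x=-1/k\}$ centered at $c(k)$: $\mathcal{WH}^\circ=\mathcal{H}(1)\curlyvee_{c(1),c(2)}\mathcal{H}(2)\curlyvee_{c(2),c(3)}\cdots$, $\mathcal{WBH}^\circ=\mathcal{B}\curlyvee_{b,c'(1)}\mathcal{H}'(1)\curlyvee_{c'(1),c'(2)}\mathcal{H}'(2)\cdots$ (with $b$ the center of the extra broom, $\mathcal{H}'(k),c'(k)$ analogous factors), $\mathcal{WH}=\mathcal{WH}^\circ\cup\{(0,0,0)\}$, $\mathcal{WBH}=\mathcal{WBH}^\circ\cup\{(0,0,0)\}$. *)

theory Defs
  imports "HOL-Analysis.Analysis"
begin

definition hf :: "'a::topological_space set \<Rightarrow> 'a set" where
  "hf X = {x \<in> X. \<forall>h. (continuous_on ({0..1::real} \<times> X) h \<and> h ` ({0..1} \<times> X) \<subseteq> X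
                         \<and> (\<forall>y\<in>X. h (0, y) = y))
                      \<longrightarrow> (\<forall>t\<in>{0..1}. h (t, x) = x)}"

definition homotopy_equivalence_pair ::
  "'a::real_normed_vector set \<Rightarrow> 'b::real_normed_vector set \<Rightarrow> ('a \<Rightarrow> 'b) \<Rightarrow> ('b \<Rightarrow> 'a) \<Rightarrow> bool" where
  "homotopy_equivalence_pair X Y f g \<longleftrightarrow>
     continuous_on X f \<and> f ` X \<subseteq> Y \<and> continuous_on Y g \<and> g ` Y \<subseteq> X \<and>
     homotopic_with_canon (\<lambda>_. True) X X (g \<circ> f) id \<and>
     homotopic_with_canon (\<lambda>_. True) Y Y (f \<circ> g) id"

definition double_broom :: "(real \<times> real) set" where
  "double_broom =
     closed_segment (0,0) (0,1) \<union> closed_segment (0,0) (0,-1) \<union>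
     (\<Union>n\<in>{1::nat..}. closed_segment (1 / real n, 0) (0, 1) \<union> closed_segment (- 1 / real n, 0) (0, -1))"

text \<open>Hairy disk built from an enumeration m of the countable dense set M of the unit circle
  and embeddings e i of the double broom (center sent to m i).\<close>
definition hairy_disk :: "(nat \<Rightarrow> real \<times> real) \<Rightarrow> (nat \<Rightarrow> real \<times> real \<Rightarrow> real \<times> real) \<Rightarrow> (real \<times> real) set" where
  "hairy_disk m e = cball 0 1 \<union> (\<Union>i. e i ` double_broom)"

definition hairy_disk_data :: "(nat \<Rightarrow> real \<times> real) \<Rightarrow> (nat \<Rightarrow> real \<times> real \<Rightarrow> real \<times> real) \<Rightarrow> bool" where
  "hairy_disk_data m e \<longleftrightarrow>
     inj m \<and> range m \<subseteq> sphere 0 1 \<and> sphere 0 1 \<subseteq> closure (range m) \<and>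
     (\<forall>i. continuous_on double_broom (e i) \<and> inj_on (e i) double_broom) \<and>
     (\<forall>i. e i (0, 0) = m i) \<and>
     (\<forall>i j. i \<noteq> j \<longrightarrow> e i ` double_broom \<inter> e j ` double_broom = {}) \<and>
     (\<forall>i. e i ` double_broom \<inter> cball 0 1 = {m i}) \<and>
     ((\<lambda>i. diameter (e i ` double_broom)) \<longlonglongrightarrow> 0)"

definition cpt :: "nat \<Rightarrow> real \<times> real \<times> real" where
  "cpt k = (- 1 / real k, 0, 0)"

text \<open>H(k): the similar copy of H (center 0) of diameter 1/k in the plane x = -1/k, centered at c(k).\<close>
definition copyH :: "(real \<times> real) set \<Rightarrow> nat \<Rightarrow> real \<times> real \<Rightarrow> real \<times> real \<times> real" where
  "copyH H k p = (let s = 1 / (real k * diameter H) in (- 1 / real k, s * fst p, s * snd p))"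

definition WHo :: "(real \<times> real) set \<Rightarrow> (real \<times> real \<times> real) set" where
  "WHo H = (\<Union>k\<in>{1::nat..}. copyH H k ` H) \<union> (\<Union>k\<in>{1::nat..}. closed_segment (cpt k) (cpt (k + 1)))"

definition WBHo :: "(real \<times> real) set \<Rightarrow> (real \<times> real \<times> real) set" where
  "WBHo H = (\<lambda>p. (-2, fst p, snd p)) ` double_broom \<union> closed_segment (-2, 0, 0) (cpt 1) \<union> WHo H"

definition WH :: "(real \<times> real) set \<Rightarrow> (real \<times> real \<times> real) set" where
  "WH H = insert 0 (WHo H)"

definition WBH :: "(real \<times> real) set \<Rightarrow> (real \<times> real \<times> real) set" where
  "WBH H = insert 0 (WBHo H)"

end

theory Submission
  imports Defs
begin


definition homot :: "'a::topological_space set \<Rightarrow> (real \<times> 'a \<Rightarrow> 'a) \<Rightarrow> bool" where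
  "homot Y h \<longleftrightarrow> continuous_on ({0..1::real} \<times> Y) h \<and> h ` ({0..1} \<times> Y) \<subseteq> Y \<and> (\<forall>y\<in>Y. h (0, y) = y)"

lemma hf_alt: "hf X = {x \<in> X. \<forall>h. homot X h \<longrightarrow> (\<forall>t\<in>{0..1}. h (t, x) = x)}"
  unfolding hf_def homot_def by auto

lemma hfD: "x \<in> hf X \<Longrightarrow> homot X h \<Longrightarrow> t \<in> {0..1} \<Longrightarrow> h (t, x) = x"
  unfolding hf_alt by auto

lemma hf_subset: "hf X \<subseteq> X" unfolding hf_def by auto

definition LC :: "'a::topological_space set \<Rightarrow> 'a \<Rightarrow> bool" where
  "LC Y y \<longleftrightarrow> (\<exists>h U. homot Y h \<and> openin (top_of_set Y) U \<and> y \<in> U \<and> (\<forall>u\<in>U. h (1, u) = h (1, y)))"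

definition LCMF :: "'a::topological_space set \<Rightarrow> 'a \<Rightarrow> 'a set \<Rightarrow> bool" where
  "LCMF Y y A \<longleftrightarrow> (\<exists>h U. homot Y h \<and> (\<forall>t\<in>{0..1}. \<forall>a\<in>A. h (t, a) = a) \<and>
      openin (top_of_set Y) U \<and> y \<in> U \<and> (\<forall>u\<in>U. h (1, u) = h (1, y)) \<and> h (1, y) \<noteq> y)"

lemma LCMF_LC: "LCMF Y y A \<Longrightarrow> LC Y y"
  unfolding LCMF_def LC_def by blast

lemma LCMF_not_hf: "LCMF Y y A \<Longrightarrow> y \<notin> hf Y"
  unfolding LCMF_def using hfD by fastforce

lemma hep_sym: "homotopy_equivalence_pair X Y f g \<Longrightarrow> homotopy_equivalence_pair Y X g f"
  unfolding homotopy_equivalence_pair_def by auto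

lemma concat_homot:
  fixes X :: "'a::real_normed_vector set" and Y :: "'b::real_normed_vector set"
  assumes he: "homotopy_equivalence_pair X Y f g" and k: "homot Y k"
  shows "\<exists>h. homot X h \<and> (\<forall>x\<in>X. \<forall>s\<in>{0..1}. h ((s+1)/2, x) = g (k (s, f x)))"
proof -
  from he have f: "continuous_on X f" "f ` X \<subseteq> Y" and g: "continuous_on Y g" "g ` Y \<subseteq> X"
    and hw: "homotopic_with_canon (\<lambda>_. True) X X (g \<circ> f) id"
    unfolding homotopy_equivalence_pair_def by auto
  from hw have "\<exists>H::real\<times>'a\<Rightarrow>'a. (continuous_on ({0..1} \<times> X) H \<and> H ` ({0..1} \<times> X) \<subseteq> X) \<and>
    (\<forall>x. H (0, x) = (g \<circ> f) x) \<and> (\<forall>x. H (1, x) = id x)"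
    unfolding homotopic_with_def by (auto simp: image_subset_iff_funcset)
  then obtain H :: "real \<times> 'a \<Rightarrow> 'a" where H: "continuous_on ({0..1} \<times> X) H" "H ` ({0..1} \<times> X) \<subseteq> X"
    "\<forall>x. H (0, x) = (g \<circ> f) x" "\<forall>x. H (1, x) = id x" by blast
  from k have kc: "continuous_on ({0..1} \<times> Y) k" "k ` ({0..1} \<times> Y) \<subseteq> Y" "\<forall>y\<in>Y. k (0, y) = y"
    unfolding homot_def by auto
  define h where "h = (\<lambda>z::real\<times>'a. if fst z \<le> 1/2 then H (1 - 2 * fst z, snd z) else g (k (2 * fst z - 1, f (snd z))))"
  have c1: "continuous_on {z \<in> {0..1::real} \<times> X. fst z \<le> 1/2} (\<lambda>z. H (1 - 2 * fst z, snd z))"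
    apply (rule continuous_on_compose2[OF H(1)])
      apply (intro continuous_intros)
    by auto
  have c2: "continuous_on {z \<in> {0..1::real} \<times> X. 1/2 \<le> fst z} (\<lambda>z. g (k (2 * fst z - 1, f (snd z))))"
  proof -
    have a: "continuous_on {z \<in> {0..1::real} \<times> X. 1/2 \<le> fst z} (\<lambda>z. (2 * fst z - 1, f (snd z)))"
      apply (intro continuous_intros)
      apply (rule continuous_on_compose2[OF f(1)])
      by (auto intro!: continuous_intros)
    have b: "continuous_on {z \<in> {0..1::real} \<times> X. 1/2 \<le> fst z} (\<lambda>z. k (2 * fst z - 1, f (snd z)))"
      apply (rule continuous_on_compose2[OF kc(1) a])
      using f(2) by (auto simp: mem_Times_iff)
    show ?thesis
      apply (rule continuous_on_compose2[OF g(1) b])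
      using kc(2) f(2) by (force simp: mem_Times_iff)
  qed
  have cont: "continuous_on ({0..1} \<times> X) h"
    unfolding h_def
    apply (rule continuous_on_cases_le[OF c1 c2])
     apply (intro continuous_intros)
  proof clarify
    fix a b assume "b \<in> X" "fst (a, b) = (1/2::real)"
    then have a: "a = 1/2" by simp
    have "f b \<in> Y" using f(2) \<open>b \<in> X\<close> by auto
    then show "H (1 - 2 * fst (a, b), snd (a, b)) = g (k (2 * fst (a, b) - 1, f (snd (a, b))))"
    proof -
      have e: "1 - 2 * a = 0" "2 * a - 1 = 0" using a by simp_all
      show ?thesis using H(3) kc(3) \<open>f b \<in> Y\<close> by (simp add: e)
    qed
  qed
  have img: "h ` ({0..1} \<times> X) \<subseteq> X"
  proof clarify
    fix t x assume t: "t \<in> {0..(1::real)}" and x: "x \<in> X"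
    show "h (t, x) \<in> X"
    proof (cases "t \<le> 1/2")
      case True then show ?thesis using H(2) t x by (auto simp: h_def)
    next
      case False
      then have "k (2 * t - 1, f x) \<in> Y" using kc(2) t x f(2) by force
      then show ?thesis using False g(2) by (auto simp: h_def)
    qed
  qed
  have h0: "\<forall>x\<in>X. h (0, x) = x" using H(4) by (simp add: h_def)
  have "homot X h" unfolding homot_def using cont img h0 by auto
  moreover have "\<forall>x\<in>X. \<forall>s\<in>{0..1}. h ((s+1)/2, x) = g (k (s, f x))"
  proof (intro ballI)
    fix x s assume "x \<in> X" "s \<in> {0..(1::real)}"
    moreover have "(2 * s + 2) / 2 - 1 = s" "2 * ((s+1)/2) - 1 = s" by (simp_all add: field_simps)
    ultimately show "h ((s+1)/2, x) = g (k (s, f x))"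
      using H(3) kc(3) f(2) by (auto simp: h_def)
  qed
  ultimately show ?thesis by blast
qed

lemma hf_track:
  fixes X :: "'a::real_normed_vector set" and Y :: "'b::real_normed_vector set"
  assumes he: "homotopy_equivalence_pair X Y f g" and k: "homot Y k" and x: "x \<in> hf X"
    and s: "s \<in> {0..1}"
  shows "g (k (s, f x)) = x"
proof -
  obtain h where h: "homot X h" "\<forall>x\<in>X. \<forall>s\<in>{0..1}. h ((s+1)/2, x) = g (k (s, f x))"
    using concat_homot[OF he k] by blast
  have "x \<in> X" using x hf_subset by blast
  then have "g (k (s, f x)) = h ((s+1)/2, x)" using h(2) s by auto
  also have "\<dots> = x" using hfD[OF x h(1)] s by auto
  finally show ?thesis .
qed

lemma A2:
  fixes X :: "'a::real_normed_vector set" and Y :: "'b::real_normed_vector set"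
  assumes he: "homotopy_equivalence_pair X Y f g" and x: "x \<in> hf X"
    and lim: "x islimpt hf X" and lc: "LC Y (f x)"
  shows False
proof -
  obtain k U where k: "homot Y k" "openin (top_of_set Y) U" "f x \<in> U" "\<forall>u\<in>U. k (1, u) = k (1, f x)"
    using lc unfolding LC_def by blast
  have f: "continuous_on X f" "f ` X \<subseteq> Y" using he unfolding homotopy_equivalence_pair_def by auto
  have "openin (top_of_set X) (X \<inter> f -` U)"
    using continuous_openin_preimage[OF f(1) _ k(2)] f(2) by (auto simp: image_subset_iff_funcset)
  then obtain W0 where W0: "open W0" "X \<inter> f -` U = X \<inter> W0" by (auto simp: openin_open)
  have xX: "x \<in> X" using x hf_subset by blast
  then have "x \<in> W0" using W0 k(3) by auto
  then obtain x' where x': "x' \<in> hf X" "x' \<in> W0" "x' \<noteq> x" using lim W0(1) unfolding islimpt_def by blast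
  have "x' \<in> X" using x' hf_subset by blast
  then have "f x' \<in> U" using W0 x' by auto
  have "x' = g (k (1, f x'))" using hf_track[OF he k(1) x'(1)] by auto
  also have "\<dots> = g (k (1, f x))" using k(4) \<open>f x' \<in> U\<close> by auto
  also have "\<dots> = x" using hf_track[OF he k(1) x] by auto
  finally show False using x'(3) by simp
qed

definition NC :: "'a::topological_space set \<Rightarrow> 'a \<Rightarrow> bool" where
  "NC Y y \<longleftrightarrow> \<not> (\<exists>h U. homot Y h \<and> openin (top_of_set Y) U \<and> y \<in> U \<and> (\<forall>u\<in>U. h (1, u) = y))"

lemma A3:
  fixes X :: "'a::real_normed_vector set" and Y :: "'b::real_normed_vector set"
  assumes he: "homotopy_equivalence_pair X Y f g" and y: "y \<in> hf Y"
    and nc: "NC Y y" and lc: "LC X (g y)"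
  shows False
proof -
  have he': "homotopy_equivalence_pair Y X g f" using hep_sym[OF he] .
  obtain k V where k: "homot X k" "openin (top_of_set X) V" "g y \<in> V" "\<forall>u\<in>V. k (1, u) = k (1, g y)"
    using lc unfolding LC_def by blast
  obtain h where h: "homot Y h" "\<forall>y\<in>Y. \<forall>s\<in>{0..1}. h ((s+1)/2, y) = f (k (s, g y))"
    using concat_homot[OF he' k(1)] by blast
  have g: "continuous_on Y g" "g ` Y \<subseteq> X" using he unfolding homotopy_equivalence_pair_def by auto
  define U where "U = Y \<inter> g -` V"
  have U: "openin (top_of_set Y) U" unfolding U_def using continuous_openin_preimage[OF g(1) _ k(2)] g(2) by (auto simp: image_subset_iff_funcset)
  have yY: "y \<in> Y" using y hf_subset by blast
  have yU: "y \<in> U" using yY k(3) by (auto simp: U_def)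
  have fk: "f (k (1, g y)) = y" using hf_track[OF he' k(1) y] by auto
  have "\<forall>u\<in>U. h (1, u) = y"
  proof
    fix u assume u: "u \<in> U"
    then have "h ((1+1)/2, u) = f (k (1, g u))" using h(2) unfolding U_def by (metis IntD1 atLeastAtMost_iff order_refl zero_le_one)
    also have "\<dots> = f (k (1, g y))" using k(4) u by (auto simp: U_def)
    finally show "h (1, u) = y" using fk by simp
  qed
  then show False using nc h(1) U yU unfolding NC_def by blast
qed

lemma abstract_main:
  fixes X :: "'a::real_normed_vector set" and Y :: "'b::real_normed_vector set"
  assumes he: "homotopy_equivalence_pair X Y f g"
    and X1: "\<forall>x\<in>X - hf X. LC X x" and X2: "\<forall>x\<in>hf X. x islimpt hf X"
    and Y1: "\<forall>y\<in>Y - hf Y. LC Y y" and Y2: "\<forall>y\<in>hf Y - {b}. y islimpt hf Y"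
    and Y3: "b \<in> hf Y \<Longrightarrow> NC Y b"
  shows "f ` hf X \<subseteq> hf Y \<and> g ` hf Y \<subseteq> hf X"
proof
  have f: "f ` X \<subseteq> Y" and g: "g ` Y \<subseteq> X" using he unfolding homotopy_equivalence_pair_def by auto
  show "f ` hf X \<subseteq> hf Y"
  proof clarify
    fix x assume x: "x \<in> hf X"
    show "f x \<in> hf Y"
    proof (rule ccontr)
      assume "f x \<notin> hf Y"
      moreover have "f x \<in> Y" using x f hf_subset by blast
      ultimately have "LC Y (f x)" using Y1 by blast
      then show False using A2[OF he x X2[rule_format, OF x]] by blast
    qed
  qed
  show "g ` hf Y \<subseteq> hf X"
  proof clarify
    fix y assume y: "y \<in> hf Y"
    show "g y \<in> hf X"
    proof (rule ccontr)
      assume "g y \<notin> hf X"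
      moreover have "g y \<in> X" using y g hf_subset by blast
      ultimately have lc: "LC X (g y)" using X1 by blast
      show False
      proof (cases "y = b")
        case True
        then show False using A3[OF he y _ lc] Y3 y by blast
      next
        case False
        then show False using A2[OF hep_sym[OF he] y _ lc] Y2 y by blast
      qed
    qed
  qed
qed


lemma seg_mem: "0 \<le> c \<Longrightarrow> c \<le> 1 \<Longrightarrow> a + c *\<^sub>R (b - a) \<in> closed_segment a b"
  unfolding closed_segment_def
  by (rule CollectI, rule exI[of _ c]) (auto simp: algebra_simps)

lemma fold_LCMF:
  fixes Y :: "'a::real_normed_vector set"
  assumes r: "r > 0" and y: "y \<in> Y"
    and star: "\<And>p. p \<in> Y \<Longrightarrow> dist p y < r \<Longrightarrow> closed_segment y p \<subseteq> Y"
    and wseg: "closed_segment y (y + w) \<subseteq> Y" and w: "w \<noteq> 0"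
  shows "LCMF Y y (Y - ball y r)"
proof -
  define l where "l = (\<lambda>p. min 1 (max 0 (2 * dist p y / r - 1)))"
  define l' where "l' = (\<lambda>p. max 0 (2 * l p - 1))"
  define m where "m = (\<lambda>p. max 0 (1 - 2 * l p))"
  define h where "h = (\<lambda>z::real \<times> 'a. if fst z \<le> 1/2 then y + (1 - 2 * fst z + 2 * fst z * l' (snd z)) *\<^sub>R (snd z - y)
        else y + ((2 * fst z - 1) * m (snd z)) *\<^sub>R w + l' (snd z) *\<^sub>R (snd z - y))"
  have lc: "continuous_on S l" for S unfolding l_def by (intro continuous_intros) (use r in auto)
  have l'c: "continuous_on S l'" for S unfolding l'_def l_def by (intro continuous_intros) (use r in auto)
  have mc: "continuous_on S m" for S unfolding m_def l_def by (intro continuous_intros) (use r in auto)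
  have cont: "continuous_on ({0..1} \<times> Y) h"
    unfolding h_def
    apply (rule continuous_on_cases_le)
    apply (intro continuous_intros continuous_on_compose2[OF l'c] continuous_on_compose2[OF mc]; force)
    apply (intro continuous_intros continuous_on_compose2[OF l'c] continuous_on_compose2[OF mc]; force)
     apply (intro continuous_intros)
  proof clarify
    fix a and b :: 'a assume "fst (a, b) = (1/2::real)"
    then have e: "1 - 2 * a = 0" "2 * a - 1 = 0" "2 * a = 1" by simp_all
    show "y + (1 - 2 * fst (a, b) + 2 * fst (a, b) * l' (snd (a, b))) *\<^sub>R (snd (a, b) - y) =
        y + ((2 * fst (a, b) - 1) * m (snd (a, b))) *\<^sub>R w + l' (snd (a, b)) *\<^sub>R (snd (a, b) - y)"
      by (simp add: e)
  qed
  have l01: "0 \<le> l p" "l p \<le> 1" for p unfolding l_def by auto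
  have l'01: "0 \<le> l' p" "l' p \<le> 1" for p unfolding l'_def using l01[of p] by auto
  have m01: "0 \<le> m p" "m p \<le> 1" for p unfolding m_def using l01[of p] by auto
  have far: "l p = 1" "l' p = 1" "m p = 0" if "dist p y \<ge> r" for p
  proof -
    have "2 * dist p y / r - 1 \<ge> 1" using that r by (simp add: field_simps)
    then show "l p = 1" unfolding l_def by auto
    then show "l' p = 1" "m p = 0" unfolding l'_def m_def by auto
  qed
  have near: "l p = 0" "l' p = 0" "m p = 1" if "dist p y < r/2" for p
  proof -
    have "2 * dist p y / r - 1 < 0" using that r by (simp add: field_simps)
    then show "l p = 0" unfolding l_def by auto
    then show "l' p = 0" "m p = 1" unfolding l'_def m_def by auto
  qed
  have img: "h (t, p) \<in> Y" if t: "t \<in> {0..1}" and p: "p \<in> Y" for t p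
  proof (cases "dist p y < r")
    case False
    then show ?thesis using far[of p] p by (auto simp: h_def)
  next
    case True
    have seg: "closed_segment y p \<subseteq> Y" using star[OF p True] .
    show ?thesis
    proof (cases "t \<le> 1/2")
      case True
      have a1: "0 \<le> 2 * t * l' p" using t l'01[of p] by simp
      have a2: "2 * t * l' p \<le> 2 * t" using t l'01[of p] by (simp add: mult_left_le)
      have "0 \<le> 1 - 2 * t + 2 * t * l' p" using a1 True by linarith
      moreover have "1 - 2 * t + 2 * t * l' p \<le> 1" using a2 by linarith
      ultimately have "y + (1 - 2 * t + 2 * t * l' p) *\<^sub>R (p - y) \<in> Y" using seg seg_mem by blast
      then show ?thesis using True by (simp add: h_def)
    next
      case False
      show ?thesis
      proof (cases "l p \<le> 1/2")
        case True
        then have "l' p = 0" unfolding l'_def by auto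
        moreover have "0 \<le> (2 * t - 1) * m p" "(2 * t - 1) * m p \<le> 1" using False t m01[of p]
          by (auto simp: mult_le_one)
        ultimately have "y + ((2 * t - 1) * m p) *\<^sub>R w + l' p *\<^sub>R (p - y) \<in> Y"
          using wseg seg_mem[of "(2 * t - 1) * m p" y "y + w"] by auto
        then show ?thesis using False by (simp add: h_def)
      next
        case False2: False
        then have "m p = 0" unfolding m_def by auto
        then have "y + ((2 * t - 1) * m p) *\<^sub>R w + l' p *\<^sub>R (p - y) \<in> Y"
          using seg seg_mem[of "l' p" y p] l'01[of p] by auto
        then show ?thesis using False by (simp add: h_def)
      qed
    qed
  qed
  have hom: "homot Y h" unfolding homot_def
  proof (intro conjI cont ballI)
    show "h ` ({0..1} \<times> Y) \<subseteq> Y" using img by auto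
    show "h (0, y) = y" if "y \<in> Y" for y by (simp add: h_def)
  qed
  have fx: "\<forall>t\<in>{0..1}. \<forall>a\<in>Y - ball y r. h (t, a) = a"
    using far by (auto simp: h_def dist_commute)
  have U: "openin (top_of_set Y) (Y \<inter> ball y (r/2))" by (auto intro: openin_open_Int)
  have yU: "y \<in> Y \<inter> ball y (r/2)" using y r by auto
  have const: "\<forall>u\<in>Y \<inter> ball y (r/2). h (1, u) = h (1, y)"
    using near near[of y] r by (auto simp: h_def dist_commute)
  have mv: "h (1, y) \<noteq> y" using near[of y] r w by (auto simp: h_def)
  show ?thesis unfolding LCMF_def using hom fx U yU const mv by blast
qed

lemma hf_closure:
  fixes Y :: "'a::real_normed_vector set"
  assumes x: "x \<in> Y" "x \<in> closure S" and S: "S \<subseteq> hf Y"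
  shows "x \<in> hf Y"
  unfolding hf_alt
proof (intro CollectI conjI x allI impI ballI)
  fix h t assume h: "homot Y h" and t: "t \<in> {0..(1::real)}"
  have hc: "continuous_on ({0..1} \<times> Y) h" using h unfolding homot_def by auto
  have "continuous_on Y (\<lambda>y. h (t, y))"
    by (rule continuous_on_compose2[OF hc, of _ "\<lambda>y. (t, y)"]) (use t in \<open>auto intro!: continuous_intros\<close>)
  then have "continuous_on Y (\<lambda>y. h (t, y) - y)"
    by (intro continuous_intros)
  from continuous_closedin_preimage_constant[OF this, of 0]
  obtain C where C: "closed C" "{y \<in> Y. h (t, y) - y = 0} = Y \<inter> C" by (auto simp: closedin_closed)
  have SY: "S \<subseteq> Y" using S hf_subset by blast
  have "S \<subseteq> C" using C(2) S SY hfD[OF _ h t] by auto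
  then have "closure S \<subseteq> C" using C(1) closure_minimal by blast
  then have "x \<in> Y \<inter> C" using x by auto
  then show "h (t, x) = x" using C(2) by auto
qed


lemma transport_LCMF:
  fixes e :: "'a::real_normed_vector \<Rightarrow> 'b::real_normed_vector"
  assumes K: "compact K" and ec: "continuous_on K e" and inj: "inj_on e K"
    and sub: "e ` K \<subseteq> Y" and op: "openin (top_of_set Y) (e ` K - {e v})"
    and v: "v \<in> K" and p: "p \<in> K" "p \<noteq> v" and L: "LCMF K p {v}"
  shows "LCMF Y (e p) {}"
proof -
  define Z where "Z = e ` K"
  obtain e' where hm: "homeomorphism K Z e e'" using homeomorphism_compact[OF K ec _ inj] Z_def by blast
  then have e'1: "\<And>x. x \<in> K \<Longrightarrow> e' (e x) = x" and e'2: "\<And>y. y \<in> Z \<Longrightarrow> e (e' y) = y"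
    and e'K: "e' ` Z = K" and e'c: "continuous_on Z e'"
    unfolding homeomorphism_def by auto
  obtain h U where h: "homot K h" "\<forall>t\<in>{0..1}. h (t, v) = v" "openin (top_of_set K) U" "p \<in> U"
    "\<forall>u\<in>U. h (1, u) = h (1, p)" "h (1, p) \<noteq> p"
    using L unfolding LCMF_def by blast
  have hc: "continuous_on ({0..1::real} \<times> K) h" "h ` ({0..1::real} \<times> K) \<subseteq> K" "\<forall>y\<in>K. h (0, y) = y"
    using h(1) unfolding homot_def by auto
  define H where "H = (\<lambda>z::real \<times> 'b. if snd z \<in> Z then e (h (fst z, e' (snd z))) else snd z)"
  have ZY: "Z \<subseteq> Y" using sub Z_def by auto
  have Zc: "closed Z" unfolding Z_def using compact_continuous_image[OF ec K] compact_imp_closed by blast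
  have split: "{0..1::real} \<times> Y = ({0..1::real} \<times> Z) \<union> ({0..1::real} \<times> (Y - (Z - {e v})))" using ZY by auto
  have cl1: "closedin (top_of_set ({0..1::real} \<times> Y)) ({0..1::real} \<times> Z)"
  proof -
    have eq: "{0..1::real} \<times> Z = ({0..1::real} \<times> Y) \<inter> ({0..1::real} \<times> Z)" using ZY by auto
    have "closed ({0..1::real} \<times> Z)" using closed_Times[OF closed_atLeastAtMost Zc] .
    then show ?thesis by (subst eq) (rule closedin_closed_Int, assumption)
  qed
  have opT: "openin (top_of_set ({0..1::real} \<times> Y)) ({0..1::real} \<times> (Z - {e v}))"
    using op by (simp add: openin_Times Z_def)
  have cl2: "closedin (top_of_set ({0..1::real} \<times> Y)) ({0..1::real} \<times> (Y - (Z - {e v})))"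
  proof -
    have eq: "{0..1::real} \<times> (Y - (Z - {e v})) = ({0..1::real} \<times> Y) - ({0..1::real} \<times> (Z - {e v}))" by auto
    have "closedin (top_of_set ({0..1::real} \<times> Y)) (({0..1::real} \<times> Y) - ({0..1::real} \<times> (Z - {e v})))"
      by (rule closedin_diff[OF _ opT]) (metis closedin_topspace topspace_euclidean_subtopology)
    then show ?thesis by (subst eq)
  qed
  have c1: "continuous_on ({0..1::real} \<times> Z) (\<lambda>z. e (h (fst z, e' (snd z))))"
  proof -
    have a: "continuous_on ({0..1::real} \<times> Z) (\<lambda>z. (fst z, e' (snd z)))"
      by (intro continuous_intros continuous_on_compose2[OF e'c]) auto
    have b: "continuous_on ({0..1::real} \<times> Z) (\<lambda>z. h (fst z, e' (snd z)))"
      by (rule continuous_on_compose2[OF hc(1) a]) (use e'K in \<open>auto simp: mem_Times_iff\<close>)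
    show ?thesis
      by (rule continuous_on_compose2[OF ec b]) (use hc(2) e'K in \<open>force simp: mem_Times_iff\<close>)
  qed
  have cont: "continuous_on ({0..1::real} \<times> Y) H"
    unfolding H_def split
  proof (rule continuous_on_cases_local)
    show "closedin (top_of_set ({0..1::real} \<times> Z \<union> {0..1::real} \<times> (Y - (Z - {e v})))) ({0..1::real} \<times> Z)"
      using cl1 split by simp
    show "closedin (top_of_set ({0..1::real} \<times> Z \<union> {0..1::real} \<times> (Y - (Z - {e v})))) ({0..1::real} \<times> (Y - (Z - {e v})))"
      using cl2 split by simp
    show "continuous_on ({0..1::real} \<times> Z) (\<lambda>z. e (h (fst z, e' (snd z))))" using c1 .
    show "continuous_on ({0..1::real} \<times> (Y - (Z - {e v}))) snd" by (rule continuous_on_snd[OF continuous_on_id])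
    fix z assume z: "z \<in> {0..1::real} \<times> Z \<and> snd z \<notin> Z \<or> z \<in> {0..1::real} \<times> (Y - (Z - {e v})) \<and> snd z \<in> Z"
    then have "fst z \<in> {0..1}" "snd z = e v" by auto
    then show "e (h (fst z, e' (snd z))) = snd z" using e'1[OF v] h(2) by simp
  qed
  have img: "H ` ({0..1::real} \<times> Y) \<subseteq> Y"
  proof clarify
    fix t y assume t: "t \<in> {0..(1::real)}" and y: "y \<in> Y"
    show "H (t, y) \<in> Y"
    proof (cases "y \<in> Z")
      case True
      then have "h (t, e' y) \<in> K" using hc(2) t e'K by blast
      then show ?thesis using True sub by (auto simp: H_def)
    qed (use y in \<open>auto simp: H_def\<close>)
  qed
  have H0: "\<forall>y\<in>Y. H (0, y) = y"
    using hc(3) e'K e'2 by (auto simp: H_def)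
  have hom: "homot Y H" unfolding homot_def using cont img H0 by auto
  define U' where "U' = e ` (U - {v})"
  have U1: "openin (top_of_set K) (U - {v})" using openin_diff[OF h(3) closedin_closed_Int[of "{v}" K]] v by (simp add: Int_absorb2)
  have U2: "openin (top_of_set Z) U'" unfolding U'_def
    using homeomorphism_imp_open_map[OF hm U1] .
  have U'sub: "U' \<subseteq> Z - {e v}" unfolding U'_def Z_def
  proof -
    have "U \<subseteq> K" using h(3) by (rule openin_imp_subset)
    then show "e ` (U - {v}) \<subseteq> e ` K - {e v}" using inj v by (auto simp: inj_on_def)
  qed
  have U3: "openin (top_of_set (Z - {e v})) U'"
  proof -
    obtain O1 where "open O1" "U' = Z \<inter> O1" using U2 by (auto simp: openin_open)
    then have "U' = (Z - {e v}) \<inter> O1" using U'sub by auto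
    then show ?thesis using \<open>open O1\<close> by (auto simp: openin_open)
  qed
  have U4: "openin (top_of_set Y) U'" using openin_trans[OF U3] op Z_def by auto
  have pU: "e p \<in> U'" unfolding U'_def using h(4) p by auto
  have pZ: "e p \<in> Z" using p Z_def by auto
  have const: "\<forall>u\<in>U'. H (1, u) = H (1, e p)"
  proof
    fix u assume "u \<in> U'"
    then obtain x where x: "x \<in> U" "x \<noteq> v" "u = e x" unfolding U'_def by auto
    have xK: "x \<in> K" using x(1) h(3) openin_imp_subset by blast
    then show "H (1, u) = H (1, e p)" using x h(5) e'1 p pZ by (auto simp: H_def Z_def)
  qed
  have mv: "H (1, e p) \<noteq> e p"
  proof -
    have "h (1, p) \<in> K" using hc(2) p by force
    then have "e (h (1, p)) \<noteq> e p" using h(6) inj p by (auto simp: inj_on_def)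
    then show ?thesis using pZ e'1 p by (simp add: H_def)
  qed
  show ?thesis unfolding LCMF_def using hom U4 pU const mv by blast
qed


definition aa :: "nat \<Rightarrow> real \<times> real" where "aa n = (1 / real n, 0)"
definition A0 :: "real \<times> real" where "A0 = (0, 1)"
definition sg :: "nat \<Rightarrow> (real \<times> real) set" where "sg n = closed_segment (aa n) A0"
definition TF :: "(real \<times> real) set" where "TF = (\<Union>n. sg n)"

lemma aa0: "aa 0 = (0,0)" by (simp add: aa_def)

lemma aa_inj: "aa m = aa n \<Longrightarrow> m = n"
  by (cases "m = 0"; cases "n = 0") (auto simp: aa_def)

lemma aa_lim: "aa \<longlonglongrightarrow> (0,0)"
proof -
  have "(\<lambda>n. 1 / real n) \<longlonglongrightarrow> 0" by (rule lim_const_over_n)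
  then have "(\<lambda>n. (1 / real n, 0::real)) \<longlonglongrightarrow> (0, 0)"
    by (intro tendsto_Pair) auto
  then show ?thesis unfolding aa_def by simp
qed

lemma sg_mem_iff: "q \<in> sg n \<longleftrightarrow> (\<exists>u\<in>{0..1}. q = ((1 - u) / real n, u))"
  unfolding sg_def closed_segment_def aa_def A0_def
  by (auto simp: algebra_simps)

lemma double_broom_eq: "double_broom = TF \<union> uminus ` TF"
proof -
  have neg: "uminus ` closed_segment a b = closed_segment (-a) (-b)" for a b :: "real \<times> real"
    using closed_segment_linear_image[of uminus a b] by (simp add: linear_uminus)
  have T: "TF = closed_segment (0,0) (0,1) \<union> (\<Union>n\<in>{1..}. closed_segment (1 / real n, 0) (0, 1))"
  proof -
    have "TF = sg 0 \<union> (\<Union>n\<in>{1..}. sg n)"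
    proof -
      have "(UNIV::nat set) = insert 0 {1..}" by auto
      then have "(\<Union>n. sg n) = (\<Union>n\<in>insert 0 {1..}. sg n)" by simp
      then show ?thesis unfolding TF_def by simp
    qed
    then show ?thesis by (simp add: sg_def aa_def A0_def)
  qed
  have "uminus ` TF = closed_segment (0,0) (0,-1) \<union> (\<Union>n\<in>{1..}. closed_segment (- 1 / real n, 0) (0, -1))"
    unfolding T image_Un image_UN neg by simp
  then show ?thesis unfolding double_broom_def T by auto
qed

lemma TF_cone: "TF = (\<lambda>z. A0 + fst z *\<^sub>R (snd z - A0)) ` ({0..1} \<times> range aa)"
proof -
  have "x \<in> closed_segment b A0 \<longleftrightarrow> (\<exists>s\<in>{0..1}. x = A0 + s *\<^sub>R (b - A0))" for x b :: "real \<times> real"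
  proof -
    have "x \<in> closed_segment b A0 \<longleftrightarrow> x \<in> closed_segment A0 b" by (simp add: closed_segment_commute)
    also have "\<dots> \<longleftrightarrow> (\<exists>s\<in>{0..1}. x = A0 + s *\<^sub>R (b - A0))"
      unfolding closed_segment_def by (auto simp: algebra_simps)
    finally show ?thesis .
  qed
  note * = this
  show ?thesis
  proof (rule set_eqI)
    fix x
    have "x \<in> TF \<longleftrightarrow> (\<exists>n. \<exists>s\<in>{0..1}. x = A0 + s *\<^sub>R (aa n - A0))"
      unfolding TF_def sg_def using * by auto
    also have "\<dots> \<longleftrightarrow> x \<in> (\<lambda>z. A0 + fst z *\<^sub>R (snd z - A0)) ` ({0..1} \<times> range aa)"
      by (auto simp: image_iff)
    finally show "x \<in> TF \<longleftrightarrow> x \<in> (\<lambda>z. A0 + fst z *\<^sub>R (snd z - A0)) ` ({0..1} \<times> range aa)" .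
  qed
qed

lemma compact_range_aa: "compact (range aa)"
proof -
  have "compact (insert (0,0) (range aa))" using compact_sequence_with_limit[OF aa_lim] .
  moreover have "insert (0,0) (range aa) = range aa" using aa0 by (metis insert_absorb rangeI)
  ultimately show ?thesis by simp
qed

lemma compact_cone:
  assumes "compact B"
  shows "compact ((\<lambda>z. A0 + fst z *\<^sub>R (snd z - A0)) ` ({0..1::real} \<times> B))"
  by (rule compact_continuous_image) (auto intro!: continuous_intros compact_Times assms)

lemma compact_TF: "compact TF"
  unfolding TF_cone using compact_cone[OF compact_range_aa] .

lemma compact_K: "compact double_broom"
  unfolding double_broom_eq
proof (rule compact_Un[OF compact_TF])
  show "compact (uminus ` TF)" by (rule compact_continuous_image[OF continuous_on_minus[OF continuous_on_id] compact_TF])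
qed

lemma TF_snd: "q \<in> TF \<Longrightarrow> 0 \<le> snd q \<and> snd q \<le> 1"
  unfolding TF_def by (auto simp: sg_mem_iff)

lemma TF_fst: "q \<in> TF \<Longrightarrow> 0 \<le> fst q"
  unfolding TF_def by (auto simp: sg_mem_iff)

lemma sg_subset_K: "sg n \<subseteq> double_broom"
  unfolding double_broom_eq TF_def by auto

lemma TF_subset_K: "TF \<subseteq> double_broom"
  unfolding double_broom_eq by auto

lemma K_sym: "uminus ` double_broom = double_broom"
  unfolding double_broom_eq image_Un by (auto simp: image_image)

lemma K_neg: "q \<in> double_broom \<Longrightarrow> - q \<in> double_broom"
  using K_sym by blast

lemma v_K: "(0,0) \<in> double_broom"
  using sg_subset_K[of 0] by (auto simp: sg_mem_iff)

lemma A0_sg: "A0 \<in> sg n" unfolding sg_def by simp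
lemma aa_sg: "aa n \<in> sg n" unfolding sg_def by simp

lemma LCMF_mono: "LCMF Y y A \<Longrightarrow> A' \<subseteq> A \<Longrightarrow> LCMF Y y A'"
  unfolding LCMF_def by blast

definition Cn :: "nat \<Rightarrow> (real \<times> real) set" where
  "Cn n = (\<lambda>z. A0 + fst z *\<^sub>R (snd z - A0)) ` ({0..1} \<times> (range aa - {aa n})) \<union> uminus ` TF"

lemma range_aa_minus:
  assumes n: "n \<ge> 1"
  shows "range aa - {aa n} = aa ` {..<n} \<union> insert (0,0) (range (\<lambda>k. aa (k + n + 1)))"
proof (rule set_eqI)
  fix x
  show "x \<in> range aa - {aa n} \<longleftrightarrow> x \<in> aa ` {..<n} \<union> insert (0,0) (range (\<lambda>k. aa (k + n + 1)))"
  proof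
    assume "x \<in> range aa - {aa n}"
    then obtain m where m: "x = aa m" "m \<noteq> n" by auto
    show "x \<in> aa ` {..<n} \<union> insert (0,0) (range (\<lambda>k. aa (k + n + 1)))"
    proof (cases "m < n")
      case True then show ?thesis using m by auto
    next
      case False
      then have "m = (m - n - 1) + n + 1" using m by auto
      then show ?thesis using m by (metis UnI2 insertI2 rangeI)
    qed
  next
    assume x: "x \<in> aa ` {..<n} \<union> insert (0,0) (range (\<lambda>k. aa (k + n + 1)))"
    then show "x \<in> range aa - {aa n}"
    proof (elim UnE insertE)
      assume "x \<in> aa ` {..<n}"
      then show ?thesis using aa_inj by fastforce
    next
      assume "x = (0,0)"
      then show ?thesis using aa0 n aa_inj by (metis DiffI rangeI singletonD not_one_le_zero)
    next
      assume "x \<in> range (\<lambda>k. aa (k + n + 1))"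
      then show ?thesis using aa_inj by fastforce
    qed
  qed
qed

lemma compact_range_aa_minus:
  assumes n: "n \<ge> 1"
  shows "compact (range aa - {aa n})"
proof -
  have l: "(\<lambda>k. aa (k + n + 1)) \<longlonglongrightarrow> (0,0)"
    using LIMSEQ_ignore_initial_segment[OF aa_lim, of "n+1"] by (simp add: add.assoc)
  show ?thesis unfolding range_aa_minus[OF n]
    by (intro compact_Un compact_sequence_with_limit[OF l] finite_imp_compact) auto
qed

lemma compact_Cn: "n \<ge> 1 \<Longrightarrow> compact (Cn n)"
  unfolding Cn_def
  by (intro compact_Un compact_cone compact_range_aa_minus compact_continuous_image[OF continuous_on_minus[OF continuous_on_id] compact_TF])

lemma cone_mem: "z \<in> (\<lambda>z. A0 + fst z *\<^sub>R (snd z - A0)) ` ({0..1} \<times> B) \<longleftrightarrow>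
    (\<exists>s\<in>{0..1}. \<exists>b\<in>B. z = A0 + s *\<^sub>R (b - A0))"
  by (auto simp: image_iff)

lemma K_split: "n \<ge> 1 \<Longrightarrow> double_broom = sg n \<union> Cn n"
proof -
  assume n: "n \<ge> 1"
  have "TF \<subseteq> sg n \<union> Cn n"
  proof
    fix x assume "x \<in> TF"
    then obtain m where "x \<in> sg m" unfolding TF_def by auto
    show "x \<in> sg n \<union> Cn n"
    proof (cases "m = n")
      case True then show ?thesis using \<open>x \<in> sg m\<close> by auto
    next
      case False
      then have "aa m \<in> range aa - {aa n}" using aa_inj by auto
      moreover have "x \<in> closed_segment A0 (aa m)" using \<open>x \<in> sg m\<close> by (simp add: sg_def closed_segment_commute)
      then obtain s where "s \<in> {0..1}" "x = A0 + s *\<^sub>R (aa m - A0)"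
        unfolding closed_segment_def by (auto simp: algebra_simps)
      ultimately have "x \<in> (\<lambda>z. A0 + fst z *\<^sub>R (snd z - A0)) ` ({0..1} \<times> (range aa - {aa n}))"
        unfolding cone_mem by blast
      then show ?thesis unfolding Cn_def by blast
    qed
  qed
  moreover have "Cn n \<subseteq> double_broom"
  proof -
    have "(\<lambda>z. A0 + fst z *\<^sub>R (snd z - A0)) ` ({0..1} \<times> (range aa - {aa n})) \<subseteq> TF"
      unfolding TF_cone by auto
    then show ?thesis unfolding Cn_def double_broom_eq by auto
  qed
  ultimately show ?thesis using sg_subset_K[of n] unfolding double_broom_eq Cn_def by auto
qed

lemma sg_Cn: assumes n: "n \<ge> 1" shows "sg n \<inter> Cn n = {A0}"
proof -
  have "x = A0" if x1: "x \<in> sg n" and x2: "x \<in> Cn n" for x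
  proof -
    obtain u where u: "u \<in> {0..1}" "x = ((1 - u) / real n, u)" using x1 by (auto simp: sg_mem_iff)
    from x2 show ?thesis unfolding Cn_def
    proof (elim UnE)
      assume "x \<in> (\<lambda>z. A0 + fst z *\<^sub>R (snd z - A0)) ` ({0..1} \<times> (range aa - {aa n}))"
      then obtain s b where sb: "s \<in> {0..1}" "b \<in> range aa - {aa n}" "x = A0 + s *\<^sub>R (b - A0)"
        unfolding cone_mem by blast
      then obtain m where "b = aa m" by auto
      then have sm: "s \<in> {0..1}" "m \<noteq> n" "x = A0 + s *\<^sub>R (aa m - A0)" using sb by auto
      then have e1: "u = 1 - s" and e2: "(1 - u) / real n = s / real m" using u
        by (auto simp: aa_def A0_def)
      show ?thesis
      proof (cases "s = 0")
        case True then show ?thesis using sm by simp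
      next
        case False
        have "s * (1 / real n) = s * (1 / real m)" using e1 e2 by simp
        then have "1 / real n = 1 / real m" using False by simp
        then have "aa n = aa m" by (simp add: aa_def)
        then show ?thesis using aa_inj sm by blast
      qed
    next
      assume "x \<in> uminus ` TF"
      then obtain y where y: "y \<in> TF" "x = - y" by auto
      then have "snd x \<le> 0" "fst x \<le> 0" using TF_snd TF_fst by fastforce+
      then have "u = 0" "(1 - u) / real n \<le> 0" using u by auto
      then show ?thesis using n by simp
    qed
  qed
  moreover have "A0 \<in> Cn n"
  proof -
    have "aa 0 \<in> range aa - {aa n}" using n aa_inj by (metis DiffI rangeI singletonD not_one_le_zero)
    then have "A0 \<in> (\<lambda>z. A0 + fst z *\<^sub>R (snd z - A0)) ` ({0..1} \<times> (range aa - {aa n}))"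
    proof -
      have "A0 = A0 + (0::real) *\<^sub>R (aa 0 - A0)" by simp
      then show ?thesis unfolding cone_mem using \<open>aa 0 \<in> range aa - {aa n}\<close> by force
    qed
    then show ?thesis unfolding Cn_def by blast
  qed
  ultimately show ?thesis using A0_sg by blast
qed

lemma aa_notin_Cn: assumes n: "n \<ge> 1" shows "aa n \<notin> Cn n"
proof
  assume "aa n \<in> Cn n"
  moreover have "aa n \<in> sg n" by (rule aa_sg)
  ultimately have "aa n = A0" using sg_Cn[OF n] by blast
  then show False by (simp add: aa_def A0_def)
qed

lemma v_notin_sg: "n \<ge> 1 \<Longrightarrow> (0,0) \<notin> sg n"
  by (auto simp: sg_mem_iff)

lemma v_in_Cn: "n \<ge> 1 \<Longrightarrow> (0,0) \<in> Cn n"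
  using K_split v_K v_notin_sg by blast


lemma K_TF_cases: "q \<in> double_broom \<Longrightarrow> 0 < snd q \<Longrightarrow> q \<in> TF"
  unfolding double_broom_eq using TF_snd by force

lemma TF_seg_A0: "q \<in> TF \<Longrightarrow> closed_segment A0 q \<subseteq> double_broom"
proof -
  assume "q \<in> TF"
  then obtain m where "q \<in> sg m" unfolding TF_def by auto
  then have "closed_segment A0 q \<subseteq> sg m"
    using A0_sg by (intro closed_segment_subset) (auto simp: sg_def)
  then show ?thesis using sg_subset_K by blast
qed

lemma LCMF_star:
  assumes p: "p \<in> double_broom" and h0: "0 < snd p" "snd p < 1"
  shows "LCMF double_broom p {(0,0)}"
proof -
  define K where "K = double_broom"
  define c where "c = snd p"
  define mu where "mu = (\<lambda>q::real\<times>real. min 1 (max 0 (4 * snd q / c - 1)))"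
  define h where "h = (\<lambda>z::real \<times> (real\<times>real). A0 + (1 - fst z * mu (snd z)) *\<^sub>R (snd z - A0))"
  have muc: "continuous_on S mu" for S unfolding mu_def using h0 by (intro continuous_intros) (auto simp: c_def)
  have cont: "continuous_on ({0..1} \<times> K) h" unfolding h_def
    by (intro continuous_intros continuous_on_compose2[OF muc]) auto
  have mu01: "0 \<le> mu q" "mu q \<le> 1" for q unfolding mu_def by auto
  have mu0: "mu q = 0" if "snd q \<le> c / 4" for q
  proof -
    have "4 * snd q / c - 1 \<le> 0" using that h0 by (simp add: c_def field_simps)
    then show ?thesis unfolding mu_def by auto
  qed
  have mu1: "mu q = 1" if "snd q > c / 2" for q
  proof -
    have "4 * snd q / c - 1 \<ge> 1" using that h0 by (simp add: c_def field_simps)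
    then show ?thesis unfolding mu_def by auto
  qed
  have img: "h (t, q) \<in> K" if t: "t \<in> {0..1}" and q: "q \<in> K" for t q
  proof (cases "snd q \<le> c / 4")
    case True then show ?thesis using q mu0 by (simp add: h_def)
  next
    case False
    then have "0 < snd q" using h0 by (simp add: c_def)
    then have "q \<in> TF" using K_TF_cases q K_def by blast
    then have seg: "closed_segment A0 q \<subseteq> K" using TF_seg_A0 K_def by blast
    have "0 \<le> 1 - t * mu q" using t mu01[of q] by (simp add: mult_le_one)
    moreover have "1 - t * mu q \<le> 1" using t mu01[of q] by simp
    ultimately show ?thesis using seg seg_mem[of "1 - t * mu q" A0 q] by (auto simp: h_def)
  qed
  have hom: "homot K h" unfolding homot_def
  proof (intro conjI cont ballI)
    show "h ` ({0..1} \<times> K) \<subseteq> K" using img by auto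
    show "h (0, y) = y" if "y \<in> K" for y by (simp add: h_def)
  qed
  have fx: "\<forall>t\<in>{0..1}. \<forall>a\<in>{(0,0)}. h (t, a) = a"
    using mu0[of "(0,0)"] h0 by (simp add: h_def c_def)
  define U where "U = K \<inter> {q. c / 2 < snd q}"
  have U: "openin (top_of_set K) U" unfolding U_def
    by (intro openin_open_Int open_Collect_less continuous_intros)
  have pU: "p \<in> U" using p h0 by (simp add: U_def K_def c_def)
  have const: "\<forall>u\<in>U. h (1, u) = h (1, p)" using mu1 pU by (simp add: U_def h_def)
  have mv: "h (1, p) \<noteq> p" using mu1[of p] pU h0 by (auto simp: U_def h_def A0_def c_def)
  show ?thesis unfolding LCMF_def K_def[symmetric] using hom fx U pU const mv by blast
qed

lemma LCMF_A0: "LCMF double_broom A0 {(0,0)}"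
proof -
  have "LCMF double_broom A0 (double_broom - ball A0 (1/2))"
  proof (rule fold_LCMF[where w = "(0,-1)"])
    show "A0 \<in> double_broom" using A0_sg sg_subset_K by blast
    show "closed_segment A0 (A0 + (0, -1)) \<subseteq> double_broom"
      using sg_subset_K[of 0] by (simp add: sg_def aa_def A0_def closed_segment_commute)
    fix q assume q: "q \<in> double_broom" "dist q A0 < 1/2"
    have "0 < snd q"
    proof (rule ccontr)
      assume "\<not> 0 < snd q"
      then have "1 \<le> \<bar>snd q - snd A0\<bar>" by (simp add: A0_def)
      also have "\<dots> \<le> dist q A0"
        by (metis dist_real_def dist_snd_le)
      finally show False using q by simp
    qed
    then show "closed_segment A0 q \<subseteq> double_broom" using q K_TF_cases TF_seg_A0 by blast
  qed (auto simp: zero_prod_def)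
  moreover have "(0,0) \<in> double_broom - ball A0 (1/2)" using v_K by (simp add: A0_def dist_norm)
  ultimately show ?thesis using LCMF_mono by blast
qed

lemma LCMF_aa:
  assumes n: "n \<ge> 1"
  shows "LCMF double_broom (aa n) {(0,0)}"
proof -
  have "open (- Cn n)" using compact_Cn[OF n] compact_imp_closed by blast
  then obtain r where r: "r > 0" "ball (aa n) r \<subseteq> - Cn n"
    using aa_notin_Cn[OF n] open_contains_ball by blast
  define r' where "r' = min r (1 / real n)"
  have r': "r' > 0" using r n by (simp add: r'_def)
  have "LCMF double_broom (aa n) (double_broom - ball (aa n) r')"
  proof (rule fold_LCMF[where w = "A0 - aa n"])
    show "aa n \<in> double_broom" using aa_sg sg_subset_K by blast
    show "closed_segment (aa n) (aa n + (A0 - aa n)) \<subseteq> double_broom"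
      using sg_subset_K[of n] by (simp add: sg_def)
    show "A0 - aa n \<noteq> 0" by (simp add: aa_def A0_def zero_prod_def)
    fix q assume q: "q \<in> double_broom" "dist q (aa n) < r'"
    then have "q \<in> ball (aa n) r" by (simp add: r'_def dist_commute)
    then have "q \<notin> Cn n" using r by auto
    then have "q \<in> sg n" using q K_split[OF n] by blast
    then show "closed_segment (aa n) q \<subseteq> double_broom"
      using aa_sg sg_subset_K by (metis closed_segment_subset convex_closed_segment sg_def subset_trans)
  qed (use r' in auto)
  moreover have "(0,0) \<in> double_broom - ball (aa n) r'"
    using v_K n by (simp add: aa_def r'_def dist_norm)
  ultimately show ?thesis using LCMF_mono by blast
qed

lemma LCMF_TF:
  assumes p: "p \<in> TF" "p \<noteq> (0,0)"
  shows "LCMF double_broom p {(0,0)}"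
proof -
  obtain n where "p \<in> sg n" using p unfolding TF_def by auto
  then obtain u where u: "u \<in> {0..1}" "p = ((1 - u) / real n, u)" by (auto simp: sg_mem_iff)
  have pK: "p \<in> double_broom" using p TF_subset_K by blast
  consider "u = 1" | "u = 0" | "0 < u \<and> u < 1" using u by fastforce
  then show ?thesis
  proof cases
    case 1 then have "p = A0" using u by (simp add: A0_def)
    then show ?thesis using LCMF_A0 by simp
  next
    case 2
    then have "p = aa n" using u by (simp add: aa_def)
    moreover have "n \<ge> 1" using p u 2 by (cases n) auto
    ultimately show ?thesis using LCMF_aa by simp
  next
    case 3 then show ?thesis using LCMF_star[OF pK] u by simp
  qed
qed

lemma LCMF_neg:
  assumes L: "LCMF double_broom p A"
  shows "LCMF double_broom (- p) (uminus ` A)"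
proof -
  define K where "K = double_broom"
  obtain h U where h: "homot K h" "\<forall>t\<in>{0..1}. \<forall>a\<in>A. h (t, a) = a" "openin (top_of_set K) U" "p \<in> U"
    "\<forall>u\<in>U. h (1, u) = h (1, p)" "h (1, p) \<noteq> p"
    using L unfolding LCMF_def K_def by blast
  have hc: "continuous_on ({0..1} \<times> K) h" "h ` ({0..1} \<times> K) \<subseteq> K" "\<forall>y\<in>K. h (0, y) = y"
    using h(1) unfolding homot_def by auto
  define h' where "h' = (\<lambda>z::real \<times> (real \<times> real). - h (fst z, - snd z))"
  have a: "continuous_on ({0..1} \<times> K) (\<lambda>z::real \<times> (real \<times> real). (fst z, - snd z))"
    by (intro continuous_intros)
  have cont: "continuous_on ({0..1} \<times> K) h'" unfolding h'_def
    apply (intro continuous_intros)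
    apply (rule continuous_on_compose2[OF hc(1) a])
    using K_neg by (auto simp: K_def mem_Times_iff)
  have img: "h' ` ({0..1} \<times> K) \<subseteq> K"
  proof (rule image_subsetI)
    fix z assume "z \<in> {0..(1::real)} \<times> K"
    then have "h (fst z, - snd z) \<in> K" using hc(2) K_neg K_def by (force simp: mem_Times_iff)
    then show "h' z \<in> K" using K_neg K_def by (simp add: h'_def)
  qed
  have hom: "homot K h'" unfolding homot_def using cont img hc(3) K_neg by (auto simp: h'_def K_def)
  have fx: "\<forall>t\<in>{0..1}. \<forall>a\<in>uminus ` A. h' (t, a) = a" using h(2) by (auto simp: h'_def)
  define U' where "U' = K \<inter> uminus -` U"
  have U': "openin (top_of_set K) U'"
  proof -
    obtain O1 where "open O1" "U = K \<inter> O1" using h(3) by (auto simp: openin_open)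
    then have "U' = K \<inter> uminus -` O1" using K_neg by (auto simp: U'_def K_def)
    moreover have "open (uminus -` O1 :: (real \<times> real) set)"
      using \<open>open O1\<close> by (intro continuous_open_vimage continuous_intros) auto
    ultimately show ?thesis by (auto intro: openin_open_Int)
  qed
  have pK: "p \<in> K" using h(3,4) openin_imp_subset by blast
  have pU: "- p \<in> U'" using h(4) pK K_neg by (simp add: U'_def K_def)
  have const: "\<forall>u\<in>U'. h' (1, u) = h' (1, - p)" using h(5) by (simp add: U'_def h'_def)
  have mv: "h' (1, - p) \<noteq> - p" using h(6) by (simp add: h'_def)
  show ?thesis unfolding LCMF_def K_def[symmetric] using hom fx U' pU const mv by blast
qed

lemma LCMF_K:
  assumes p: "p \<in> double_broom" "p \<noteq> (0,0)"
  shows "LCMF double_broom p {(0,0)}"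
proof -
  from p consider "p \<in> TF" | "p \<in> uminus ` TF" unfolding double_broom_eq by blast
  then show ?thesis
  proof cases
    case 1 then show ?thesis using LCMF_TF p by blast
  next
    case 2
    then have "- p \<in> TF" "- p \<noteq> (0,0)" using p by auto
    then have "LCMF double_broom (- p) {(0,0)}" using LCMF_TF by blast
    from LCMF_neg[OF this] show ?thesis by simp
  qed
qed


locale broom_emb =
  fixes e :: "real \<times> real \<Rightarrow> 'a::real_normed_vector" and Y :: "'a set"
  assumes ec: "continuous_on double_broom e" and inj: "inj_on e double_broom"
    and sub: "e ` double_broom \<subseteq> Y" and op: "openin (top_of_set Y) (e ` double_broom - {e (0,0)})"
begin

lemma W_open:
  assumes n: "n \<ge> 1"
  shows "openin (top_of_set Y) (e ` (sg n - {A0}))"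
proof -
  have eq: "e ` (sg n - {A0}) = (e ` double_broom - {e (0,0)}) - (Y \<inter> e ` Cn n)"
  proof (rule set_eqI)
    fix y
    show "y \<in> e ` (sg n - {A0}) \<longleftrightarrow> y \<in> (e ` double_broom - {e (0,0)}) - (Y \<inter> e ` Cn n)"
    proof
      assume "y \<in> e ` (sg n - {A0})"
      then obtain x where x: "x \<in> sg n" "x \<noteq> A0" "y = e x" by auto
      have xK: "x \<in> double_broom" using x sg_subset_K by blast
      have "x \<noteq> (0,0)" using x v_notin_sg[OF n] by auto
      then have "y \<noteq> e (0,0)" using inj x xK v_K by (auto simp: inj_on_def)
      moreover have "y \<notin> e ` Cn n"
      proof
        assume "y \<in> e ` Cn n"
        then obtain x' where "x' \<in> Cn n" "y = e x'" by auto
        then have "x' = x" using inj x xK K_split[OF n] by (auto simp: inj_on_def)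
        then show False using sg_Cn[OF n] x \<open>x' \<in> Cn n\<close> by blast
      qed
      ultimately show "y \<in> (e ` double_broom - {e (0,0)}) - (Y \<inter> e ` Cn n)" using x xK by auto
    next
      assume y: "y \<in> (e ` double_broom - {e (0,0)}) - (Y \<inter> e ` Cn n)"
      then obtain x where x: "x \<in> double_broom" "y = e x" by auto
      have "y \<in> Y" using sub x by auto
      then have "x \<notin> Cn n" using y x by auto
      then have "x \<in> sg n" "x \<noteq> A0" using x K_split[OF n] sg_Cn[OF n] by auto
      then show "y \<in> e ` (sg n - {A0})" using x by auto
    qed
  qed
  have "closed (e ` Cn n)"
    using compact_Cn[OF n] ec K_split[OF n]
    by (intro compact_imp_closed compact_continuous_image) (auto elim: continuous_on_subset)
  then have "closedin (top_of_set Y) (Y \<inter> e ` Cn n)" by (simp add: closedin_closed_Int)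
  then show ?thesis unfolding eq by (rule openin_diff[OF op])
qed

lemma W_closed:
  assumes n: "n \<ge> 1"
  shows "closedin (top_of_set (Y - {e A0})) (e ` (sg n - {A0}))"
proof -
  have cs: "closed (e ` sg n)"
  proof -
    have "continuous_on (sg n) e" using ec sg_subset_K by (rule continuous_on_subset)
    then show ?thesis by (intro compact_imp_closed compact_continuous_image) (auto simp: sg_def)
  qed
  have "e ` (sg n - {A0}) = (Y - {e A0}) \<inter> e ` sg n"
  proof (rule set_eqI)
    fix y
    show "y \<in> e ` (sg n - {A0}) \<longleftrightarrow> y \<in> (Y - {e A0}) \<inter> e ` sg n"
      using inj sg_subset_K sub A0_sg unfolding inj_on_def by blast
  qed
  then show ?thesis using cs by (simp add: closedin_closed_Int)
qed

lemma track:
  assumes n: "n \<ge> 1" and h: "homot Y h" and t1: "t1 \<in> {0..1}"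
    and avoid: "\<forall>s\<in>{0..t1}. h (s, e (aa n)) \<noteq> e A0"
  shows "h (t1, e (aa n)) \<in> e ` (sg n - {A0})"
proof -
  have hc: "continuous_on ({0..1} \<times> Y) h" "h ` ({0..1} \<times> Y) \<subseteq> Y" "\<forall>y\<in>Y. h (0, y) = y"
    using h unfolding homot_def by auto
  have aK: "aa n \<in> double_broom" using aa_sg sg_subset_K by blast
  then have aY: "e (aa n) \<in> Y" using sub by auto
  define P where "P = (\<lambda>s. h (s, e (aa n))) ` {0..t1}"
  have "continuous_on {0..t1} (\<lambda>s. h (s, e (aa n)))"
    by (rule continuous_on_compose2[OF hc(1), of _ "\<lambda>s. (s, e (aa n))"]) (use t1 aY in \<open>auto intro!: continuous_intros\<close>)
  then have "connected P" unfolding P_def by (rule connected_continuous_image) simp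
  moreover have PY: "P \<subseteq> Y - {e A0}" unfolding P_def using hc(2) t1 aY avoid by force
  ultimately have cP: "connectedin (top_of_set (Y - {e A0})) P"
    by (simp add: connectedin_subtopology)
  have Wsub: "e ` (sg n - {A0}) \<subseteq> Y - {e A0}"
    using sub sg_subset_K inj A0_sg unfolding inj_on_def by blast
  have Wo: "openin (top_of_set (Y - {e A0})) (e ` (sg n - {A0}))"
    using W_open[OF n] Wsub by (metis Diff_subset openin_subset_trans)
  have "P \<subseteq> e ` (sg n - {A0}) \<or> disjnt P (e ` (sg n - {A0}))"
    using connectedin_clopen_cases[OF cP W_closed[OF n] Wo] .
  moreover have "e (aa n) \<in> P" unfolding P_def using t1 hc(3) aY by (force intro: image_eqI[of _ _ 0])
  moreover have "e (aa n) \<in> e ` (sg n - {A0})" using aa_sg by (auto simp: aa_def A0_def)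
  ultimately have "P \<subseteq> e ` (sg n - {A0})" by (auto simp: disjnt_def)
  then show ?thesis unfolding P_def using t1 by auto
qed

lemma aa_tends: "((\<lambda>n. e (aa n)) \<longlongrightarrow> e (0,0)) sequentially"
proof (rule continuous_on_tendsto_compose[OF ec aa_lim v_K])
  show "\<forall>\<^sub>F n in sequentially. aa n \<in> double_broom" using aa_sg sg_subset_K by (intro always_eventually) blast
qed

lemma UC:
  assumes h: "homot Y h" and eps: "\<epsilon> > 0"
  shows "\<exists>N. \<forall>n\<ge>N. \<forall>s\<in>{0..1}. dist (h (s, e (aa n))) (h (s, e (0,0))) < \<epsilon>"
proof -
  have hc: "continuous_on ({0..1} \<times> Y) h" using h unfolding homot_def by auto
  have cK: "compact (e ` double_broom)" using compact_continuous_image[OF ec compact_K] .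
  have "continuous_on ({0..1} \<times> e ` double_broom) h"
    using continuous_on_subset[OF hc] sub by (meson Sigma_mono order_refl)
  then have "uniformly_continuous_on ({0..1} \<times> e ` double_broom) h"
    using cK by (intro compact_uniformly_continuous compact_Times) auto
  then obtain d where d: "d > 0" "\<forall>x\<in>{0..1} \<times> e ` double_broom. \<forall>x'\<in>{0..1} \<times> e ` double_broom.
      dist x' x < d \<longrightarrow> dist (h x') (h x) < \<epsilon>"
    using eps unfolding uniformly_continuous_on_def by blast
  obtain N where N: "\<forall>n\<ge>N. dist (e (aa n)) (e (0,0)) < d"
    using aa_tends d(1) unfolding tendsto_iff eventually_sequentially by blast
  have "\<forall>n\<ge>N. \<forall>s\<in>{0..1}. dist (h (s, e (aa n))) (h (s, e (0,0))) < \<epsilon>"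
  proof (intro allI impI ballI)
    fix n s assume n: "n \<ge> N" and s: "s \<in> {0..(1::real)}"
    have m1: "(s, e (aa n)) \<in> {0..1} \<times> e ` double_broom" using s aa_sg sg_subset_K by blast
    have m2: "(s, e (0,0)) \<in> {0..1} \<times> e ` double_broom" using s v_K by blast
    have "dist (s, e (aa n)) (s, e (0,0)) < d" using N n by (simp add: dist_Pair_Pair)
    then show "dist (h (s, e (aa n))) (h (s, e (0,0))) < \<epsilon>" using d(2) m1 m2 by blast
  qed
  then show ?thesis by blast
qed

lemma side:
  assumes h: "homot Y h" and t1: "t1 \<in> {0..1}" and del: "0 < \<delta>" "2 * \<delta> \<le> dist (e (0,0)) (e A0)"
    and close: "\<forall>s\<in>{0..t1}. dist (h (s, e (0,0))) (e (0,0)) < \<delta>"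
  shows "\<exists>q\<in>double_broom. h (t1, e (0,0)) = e q \<and> fst q = 0 \<and> 0 \<le> snd q"
proof -
  define z where "z = h (t1, e (0,0))"
  have approx: "\<exists>n\<ge>M. \<exists>q\<in>sg n. dist (e q) z < \<epsilon>" if eps: "\<epsilon> > 0" for \<epsilon> M
  proof -
    obtain N where N: "\<forall>n\<ge>N. \<forall>s\<in>{0..1}. dist (h (s, e (aa n))) (h (s, e (0,0))) < min \<epsilon> \<delta>"
      using UC[OF h, of "min \<epsilon> \<delta>"] eps del by auto
    define n where "n = max (max N M) 1"
    have n: "n \<ge> 1" "n \<ge> N" "n \<ge> M" by (auto simp: n_def)
    have avoid: "\<forall>s\<in>{0..t1}. h (s, e (aa n)) \<noteq> e A0"
    proof (intro ballI notI)
      fix s assume s: "s \<in> {0..t1}" and eq: "h (s, e (aa n)) = e A0"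
      have s1: "s \<in> {0..1}" using s t1 by auto
      have "dist (e A0) (e (0,0)) \<le> dist (h (s, e (aa n))) (h (s, e (0,0))) + dist (h (s, e (0,0))) (e (0,0))"
        using eq dist_triangle by metis
      also have "\<dots> < \<delta> + \<delta>" using N n s1 close s by (intro add_strict_mono) force+
      finally show False using del by (simp add: dist_commute)
    qed
    have "h (t1, e (aa n)) \<in> e ` (sg n - {A0})" using track[OF n(1) h t1 avoid] .
    then obtain q where q: "q \<in> sg n" "h (t1, e (aa n)) = e q" by auto
    have "dist (e q) z < \<epsilon>" using N n t1 q by (force simp: z_def)
    then show ?thesis using n q by blast
  qed
  have cK: "closed (e ` double_broom)" using compact_continuous_image[OF ec compact_K] compact_imp_closed by blast
  have "z \<in> closure (e ` double_broom)"
  proof (rule closure_approachable[THEN iffD2], intro allI impI)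
    fix \<epsilon> :: real assume "\<epsilon> > 0"
    then obtain n q where "q \<in> sg n" "dist (e q) z < \<epsilon>" using approx by blast
    then show "\<exists>y\<in>e ` double_broom. dist y z < \<epsilon>" using sg_subset_K by blast
  qed
  then have "z \<in> e ` double_broom" using cK by simp
  then obtain q where q: "q \<in> double_broom" "z = e q" by auto
  define g0 where "g0 = the_inv_into double_broom e"
  have g0c: "continuous_on (e ` double_broom) g0" unfolding g0_def
    using continuous_on_inv_into[OF ec compact_K inj] .
  have g0e: "g0 (e x) = x" if "x \<in> double_broom" for x
    unfolding g0_def using the_inv_into_f_f[OF inj that] .
  have bound: "\<bar>fst q\<bar> < 2 * c \<and> - c < snd q" if c: "c > 0" for c
  proof -
    have zK: "z \<in> e ` double_broom" using q by auto
    obtain \<rho> where \<rho>: "\<rho> > 0" "\<forall>w\<in>e ` double_broom. dist w z < \<rho> \<longrightarrow> dist (g0 w) (g0 z) < c"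
      using g0c zK c unfolding continuous_on_iff by blast
    obtain M :: nat where M: "1 / c < real M" using reals_Archimedean2 by blast
    obtain n q' where nq: "n \<ge> M" "q' \<in> sg n" "dist (e q') z < \<rho>" using approx[OF \<rho>(1), of M] by blast
    have q'K: "q' \<in> double_broom" using nq sg_subset_K by blast
    have "dist (g0 (e q')) (g0 z) < c" using \<rho>(2) nq q'K by blast
    then have "dist q' q < c" using g0e[OF q'K] g0e[OF q(1)] q(2) by simp
    then have d1: "\<bar>fst q' - fst q\<bar> < c" "\<bar>snd q' - snd q\<bar> < c"
      using dist_fst_le[of q' q] dist_snd_le[of q' q] by (auto simp: dist_real_def)
    obtain u where u: "u \<in> {0..1}" "q' = ((1 - u) / real n, u)" using nq(2) by (auto simp: sg_mem_iff)
    have "n > 0" using M nq c by (cases n) (auto simp: field_simps)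
    have "1 / real n < c"
    proof -
      have "1 / c < real n" using M nq by linarith
      then show ?thesis using c \<open>n > 0\<close> by (simp add: field_simps)
    qed
    moreover have "0 \<le> (1 - u) / real n" "(1 - u) / real n \<le> 1 / real n" using u \<open>n > 0\<close>
      by (auto simp: divide_right_mono)
    ultimately have "0 \<le> fst q'" "fst q' < c" "0 \<le> snd q'" using u by auto
    then show ?thesis using d1 by linarith
  qed
  have f0: "fst q = 0"
  proof (rule ccontr)
    assume "fst q \<noteq> 0"
    then have "\<bar>fst q\<bar> > 0" by simp
    from bound[of "\<bar>fst q\<bar> / 4"] this show False by linarith
  qed
  have s0: "0 \<le> snd q"
  proof (rule ccontr)
    assume "\<not> 0 \<le> snd q"
    from bound[of "- snd q / 2"] this show False by linarith
  qed
  show ?thesis using q f0 s0 by (auto simp: z_def)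
qed

end

lemma broom_emb_neg:
  assumes "broom_emb e Y"
  shows "broom_emb (\<lambda>q. e (- q)) Y"
proof -
  interpret broom_emb e Y by fact
  have im: "(\<lambda>q. e (- q)) ` double_broom = e ` double_broom"
    using K_sym by (metis image_image)
  show ?thesis
  proof
    show "continuous_on double_broom (\<lambda>q. e (- q))"
      by (rule continuous_on_compose2[OF ec]) (auto intro: continuous_intros simp: K_neg image_subset_iff)
    show "inj_on (\<lambda>q. e (- q)) double_broom"
      using inj K_neg unfolding inj_on_def by fastforce
    show "(\<lambda>q. e (- q)) ` double_broom \<subseteq> Y" using im sub by simp
    show "openin (top_of_set Y) ((\<lambda>q. e (- q)) ` double_broom - {e (- (0,0))})" using im op by simp
  qed
qed

context broom_emb
begin

lemma KC:
  assumes h: "homot Y h" and t1: "t1 \<in> {0..1}" and del: "0 < \<delta>" "2 * \<delta> \<le> dist (e (0,0)) (e A0)"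
    "2 * \<delta> \<le> dist (e (0,0)) (e (- A0))"
    and close: "\<forall>s\<in>{0..t1}. dist (h (s, e (0,0))) (e (0,0)) < \<delta>"
  shows "h (t1, e (0,0)) = e (0,0)"
proof -
  interpret N: broom_emb "\<lambda>q. e (- q)" Y using broom_emb_neg broom_emb_axioms by blast
  obtain q where q: "q \<in> double_broom" "h (t1, e (0,0)) = e q" "fst q = 0" "0 \<le> snd q"
    using side[OF h t1 del(1,2) close] by blast
  have "\<exists>q\<in>double_broom. h (t1, e (- (0,0))) = e (- q) \<and> fst q = 0 \<and> 0 \<le> snd q"
    using N.side[OF h t1 del(1)] del close by simp
  then obtain q2 where q2: "q2 \<in> double_broom" "h (t1, e (- (0,0))) = e (- q2)" "fst q2 = 0" "0 \<le> snd q2"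
    by blast
  have "e q = e (- q2)" using q q2 by simp
  then have "q = - q2" using inj q(1) K_neg[OF q2(1)] unfolding inj_on_def by blast
  then have "q = (0,0)" using q q2 by (simp add: prod_eq_iff)
  then show ?thesis using q by simp
qed

lemma hf_center: "e (0,0) \<in> hf Y"
  unfolding hf_alt
proof (intro CollectI conjI allI impI ballI)
  show mY: "e (0,0) \<in> Y" using sub v_K by blast
  fix h t assume h: "homot Y h" and t: "t \<in> {0..(1::real)}"
  define m where "m = e (0,0)"
  define \<delta> where "\<delta> = min (dist m (e A0)) (dist m (e (- A0))) / 2"
  have "A0 \<noteq> (0,0)" "- A0 \<noteq> (0,0)" by (auto simp: A0_def)
  moreover have "A0 \<in> double_broom" "- A0 \<in> double_broom" using A0_sg sg_subset_K K_neg by blast+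
  ultimately have "e A0 \<noteq> m" "e (- A0) \<noteq> m" using inj v_K unfolding inj_on_def m_def by metis+
  then have dpos: "\<delta> > 0" by (simp add: \<delta>_def)
  have d2: "2 * \<delta> \<le> dist (e (0,0)) (e A0)" "2 * \<delta> \<le> dist (e (0,0)) (e (- A0))" by (auto simp: \<delta>_def m_def)
  have hc: "continuous_on ({0..1} \<times> Y) h" "\<forall>y\<in>Y. h (0, y) = y" using h unfolding homot_def by auto
  have pc: "continuous_on {0..1} (\<lambda>s. h (s, m))"
    by (rule continuous_on_compose2[OF hc(1), of _ "\<lambda>s. (s, m)"]) (use mY in \<open>auto intro!: continuous_intros simp: m_def\<close>)
  show "h (t, e (0,0)) = e (0,0)"
  proof (rule ccontr)
    assume nt: "h (t, e (0,0)) \<noteq> e (0,0)"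
    define T where "T = {s \<in> {0..1}. h (s, m) \<noteq> m}"
    define \<tau> where "\<tau> = Inf T"
    have Tne: "T \<noteq> {}" using nt t by (auto simp: T_def m_def)
    have Tb: "bdd_below T" unfolding T_def by (rule bdd_belowI[of _ 0]) auto
    have below: "s \<notin> T" if "s < \<tau>" for s using cInf_lower[OF _ Tb] that \<tau>_def by force
    have tau01: "\<tau> \<in> {0..1}"
    proof -
      obtain s where "s \<in> T" using Tne by blast
      then have "\<tau> \<le> s" "s \<le> 1" using cInf_lower[OF _ Tb] by (auto simp: \<tau>_def T_def)
      moreover have "0 \<le> \<tau>" unfolding \<tau>_def using Tne by (rule cInf_greatest) (auto simp: T_def)
      ultimately show ?thesis by auto
    qed
    obtain \<epsilon> where eps: "\<epsilon> > 0" "\<forall>s\<in>{0..1}. dist s \<tau> < \<epsilon> \<longrightarrow> dist (h (s, m)) (h (\<tau>, m)) < \<delta> / 2"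
      using pc tau01 dpos unfolding continuous_on_iff by (metis half_gt_zero)
    have dtau: "dist (h (\<tau>, m)) m < \<delta> / 2"
    proof (cases "\<tau> = 0")
      case True then show ?thesis using hc(2) mY dpos by (simp add: m_def)
    next
      case False
      define s where "s = max 0 (\<tau> - \<epsilon> / 2)"
      have s: "s \<in> {0..1}" "s < \<tau>" "dist s \<tau> < \<epsilon>" using tau01 False eps by (auto simp: s_def dist_real_def)
      then have "h (s, m) = m" using below[of s] by (auto simp: T_def)
      moreover have "dist (h (s, m)) (h (\<tau>, m)) < \<delta> / 2" using eps(2) s by blast
      ultimately show ?thesis by (simp add: dist_commute)
    qed
    obtain t2 where t2: "t2 \<in> T" "t2 < \<tau> + \<epsilon>" using cInf_lessD[OF Tne, of "\<tau> + \<epsilon>"] eps(1) by (auto simp: \<tau>_def)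
    have t2g: "\<tau> \<le> t2" using cInf_lower[OF t2(1) Tb] by (simp add: \<tau>_def)
    have t21: "t2 \<in> {0..1}" using t2 by (auto simp: T_def)
    have "\<forall>s\<in>{0..t2}. dist (h (s, e (0,0))) (e (0,0)) < \<delta>"
    proof
      fix s assume s: "s \<in> {0..t2}"
      show "dist (h (s, e (0,0))) (e (0,0)) < \<delta>"
      proof (cases "s < \<tau>")
        case True
        then have "h (s, m) = m" using below[of s] s t21 by (auto simp: T_def)
        then show ?thesis using dpos by (simp add: m_def)
      next
        case False
        then have "dist s \<tau> < \<epsilon>" "s \<in> {0..1}" using s t2 t21 by (auto simp: dist_real_def)
        then have "dist (h (s, m)) (h (\<tau>, m)) < \<delta> / 2" using eps(2) by blast
        then have "dist (h (s, m)) m < \<delta>" using dtau dist_triangle[of "h (s, m)" m "h (\<tau>, m)"] by linarith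
        then show ?thesis by (simp add: m_def)
      qed
    qed
    then have "h (t2, e (0,0)) = e (0,0)" using KC[OF h t21 dpos d2] by blast
    then show False using t2 by (simp add: T_def m_def)
  qed
qed

lemma NC_center: "NC Y (e (0,0))"
  unfolding NC_def
proof
  assume "\<exists>h U. homot Y h \<and> openin (top_of_set Y) U \<and> e (0,0) \<in> U \<and> (\<forall>u\<in>U. h (1, u) = e (0,0))"
  then obtain h U where h: "homot Y h" "openin (top_of_set Y) U" "e (0,0) \<in> U" "\<forall>u\<in>U. h (1, u) = e (0,0)"
    by blast
  define m where "m = e (0,0)"
  have "A0 \<noteq> (0,0)" by (auto simp: A0_def)
  moreover have "A0 \<in> double_broom" using A0_sg sg_subset_K by blast
  ultimately have "e A0 \<noteq> m" using inj v_K unfolding inj_on_def m_def by metis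
  then have dpos: "dist m (e A0) > 0" by simp
  obtain N where N: "\<forall>n\<ge>N. \<forall>s\<in>{0..1}. dist (h (s, e (aa n))) (h (s, m)) < dist m (e A0)"
    using UC[OF h(1) dpos] m_def by blast
  obtain O1 where O1: "open O1" "U = Y \<inter> O1" using h(2) by (auto simp: openin_open)
  have "m \<in> O1" using h(3) O1 m_def by auto
  then have "\<forall>\<^sub>F n in sequentially. e (aa n) \<in> O1" using aa_tends O1(1) m_def
    by (simp add: tendsto_def)
  then obtain N2 where N2: "\<forall>n\<ge>N2. e (aa n) \<in> O1" unfolding eventually_sequentially by blast
  define n where "n = max (max N N2) 1"
  have n: "n \<ge> 1" "n \<ge> N" "n \<ge> N2" by (auto simp: n_def)
  have aK: "aa n \<in> double_broom" using aa_sg sg_subset_K by blast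
  have aU: "e (aa n) \<in> U" using N2 n O1 sub aK by auto
  have mhf: "m \<in> hf Y" using hf_center m_def by simp
  have avoid: "\<forall>s\<in>{0..1}. h (s, e (aa n)) \<noteq> e A0"
  proof (intro ballI notI)
    fix s assume s: "s \<in> {0..(1::real)}" and eq: "h (s, e (aa n)) = e A0"
    have "h (s, m) = m" using hfD[OF mhf h(1) s] .
    then have "dist (e A0) m < dist m (e A0)" using N n s eq by force
    then show False by (simp add: dist_commute)
  qed
  have "h (1, e (aa n)) \<in> e ` (sg n - {A0})" using track[OF n(1) h(1) _ avoid] by simp
  moreover have "h (1, e (aa n)) = e (0,0)" using h(4) aU by blast
  ultimately have "e (0,0) \<in> e ` sg n" by auto
  then obtain x where "x \<in> sg n" "e x = e (0,0)" by auto
  then have "x = (0,0)" using inj v_K sg_subset_K unfolding inj_on_def by blast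
  then show False using \<open>x \<in> sg n\<close> v_notin_sg[OF n(1)] by simp
qed

lemma LCMF_broom:
  assumes p: "p \<in> double_broom" "p \<noteq> (0,0)"
  shows "LCMF Y (e p) {}"
  by (rule transport_LCMF[OF compact_K ec inj sub op v_K p LCMF_K[OF p]])

end


locale hd =
  fixes m :: "nat \<Rightarrow> real \<times> real" and e :: "nat \<Rightarrow> real \<times> real \<Rightarrow> real \<times> real"
  assumes hdd: "hairy_disk_data m e"
begin

definition Hd where "Hd = hairy_disk m e"

lemma
  shows m_inj: "inj m" and m_sph: "range m \<subseteq> sphere 0 1" and m_dense: "sphere 0 1 \<subseteq> closure (range m)"
    and e_cont: "\<And>i. continuous_on double_broom (e i)" and e_inj: "\<And>i. inj_on (e i) double_broom"
    and e_v: "\<And>i. e i (0,0) = m i"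
    and e_disj: "\<And>i j. i \<noteq> j \<Longrightarrow> e i ` double_broom \<inter> e j ` double_broom = {}"
    and e_ball: "\<And>i. e i ` double_broom \<inter> cball 0 1 = {m i}"
    and e_diam: "(\<lambda>i. diameter (e i ` double_broom)) \<longlonglongrightarrow> 0"
  using hdd unfolding hairy_disk_data_def by auto

lemma Hd_eq: "Hd = cball 0 1 \<union> (\<Union>i. e i ` double_broom)"
  unfolding Hd_def hairy_disk_def by simp

lemma compact_eK: "compact (e i ` double_broom)"
  using compact_continuous_image[OF e_cont compact_K] .

lemma m_eK: "m i \<in> e i ` double_broom"
  using e_v v_K by (metis image_eqI)

lemma norm_m: "norm (m i) = 1" using m_sph by (metis (no_types, lifting) dist_0_norm mem_sphere rangeI subsetD)

lemma eK_dist: "x \<in> e i ` double_broom \<Longrightarrow> dist x (m i) \<le> diameter (e i ` double_broom)"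
  using diameter_bounded_bound[OF compact_imp_bounded[OF compact_eK] _ m_eK] by blast

lemma eK_norm: "x \<in> e i ` double_broom \<Longrightarrow> x \<noteq> m i \<Longrightarrow> norm x > 1"
  using e_ball[of i] by (force simp: dist_norm)

lemma eK_norm_ge: "x \<in> e i ` double_broom \<Longrightarrow> norm x \<ge> 1"
  using eK_norm[of x i] norm_m by (cases "x = m i") auto

lemma bounded_Hd: "bounded Hd"
proof -
  obtain B where B: "\<forall>i. norm (diameter (e i ` double_broom)) \<le> B"
    using convergent_imp_bounded[OF e_diam] unfolding bounded_iff by auto
  have "Hd \<subseteq> cball 0 (1 + B)"
  proof
    fix x assume "x \<in> Hd"
    then consider "x \<in> cball 0 1" | i where "x \<in> e i ` double_broom" unfolding Hd_eq by auto
    then show "x \<in> cball 0 (1 + B)"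
    proof cases
      case 1 then show ?thesis using B[rule_format, of 0] by auto
    next
      case 2
      have "norm x \<le> norm (m i) + dist x (m i)" by (metis dist_norm norm_triangle_sub add.commute)
      also have "\<dots> \<le> 1 + B" using eK_dist[OF 2] B[rule_format, of i] norm_m[of i] by auto
      finally show ?thesis by simp
    qed
  qed
  then show ?thesis using bounded_cball bounded_subset by blast
qed

lemma diam_Hd: "diameter Hd \<ge> 2"
proof -
  have a: "(1,0) \<in> Hd" "(-1,0) \<in> Hd" unfolding Hd_eq by auto
  have "dist (1::real,0::real) (-1,0) = 2" by (simp add: dist_Pair_Pair dist_real_def)
  then show ?thesis using diameter_bounded_bound[OF bounded_Hd a] by simp
qed

lemma compact_Hd_closed_union:
  fixes J :: "nat set" and q :: "real \<times> real"
  assumes q: "norm q > 1" and qn: "\<forall>j\<in>J. q \<notin> e j ` double_broom"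
  shows "\<exists>\<rho>>0. \<forall>j\<in>J. \<forall>x\<in>e j ` double_broom. dist x q \<ge> \<rho>"
proof -
  define \<delta> where "\<delta> = norm q - 1"
  have d: "\<delta> > 0" using q by (simp add: \<delta>_def)
  obtain N where N: "\<forall>j\<ge>N. diameter (e j ` double_broom) < \<delta> / 2"
    using e_diam d unfolding lim_sequentially by (metis dist_real_def diff_zero half_gt_zero abs_of_nonneg diameter_ge_0 compact_eK compact_imp_bounded)
  define F where "F = (\<Union>j\<in>J \<inter> {..<N}. e j ` double_broom)"
  have "compact F" unfolding F_def by (intro compact_UN compact_eK) auto
  moreover have "q \<notin> F" using qn by (auto simp: F_def)
  ultimately obtain \<rho>1 where r1: "\<rho>1 > 0" "\<forall>x\<in>F. \<rho>1 \<le> dist x q"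
    using compact_imp_closed
    by (metis dist_commute separate_point_closed)
  define \<rho> where "\<rho> = min \<rho>1 (\<delta> / 2)"
  have "\<forall>j\<in>J. \<forall>x\<in>e j ` double_broom. dist x q \<ge> \<rho>"
  proof (intro ballI)
    fix j x assume j: "j \<in> J" and x: "x \<in> e j ` double_broom"
    show "dist x q \<ge> \<rho>"
    proof (cases "j < N")
      case True
      then have "x \<in> F" using j x by (auto simp: F_def)
      then have "\<rho>1 \<le> dist x q" using r1 by blast
      then show ?thesis by (simp add: \<rho>_def)
    next
      case False
      then have "diameter (e j ` double_broom) < \<delta> / 2" using N by simp
      then have "dist x (m j) < \<delta> / 2" using eK_dist[OF x] by linarith
      then have "norm x < 1 + \<delta> / 2" using norm_m[of j] by (metis dist_norm norm_triangle_sub add.commute order.strict_trans1 add_le_less_mono order_refl)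
      then have "dist x q > \<delta> / 2" unfolding \<delta>_def using norm_triangle_sub[of q x]
        by (simp add: dist_norm norm_minus_commute field_simps)
      then show ?thesis by (simp add: \<rho>_def)
    qed
  qed
  then show ?thesis using r1 d by (intro exI[of _ \<rho>]) (auto simp: \<rho>_def)
qed

lemma Hd_local_broom:
  assumes q: "q \<in> e i ` double_broom" "q \<noteq> m i"
  shows "\<exists>\<rho>>0. \<forall>x\<in>Hd. dist x q < \<rho> \<longrightarrow> x \<in> e i ` double_broom \<and> x \<noteq> m i"
proof -
  have nq: "norm q > 1" using eK_norm[OF q] .
  have "\<forall>j\<in>-{i}. q \<notin> e j ` double_broom" using e_disj q by blast
  then obtain \<rho> where r: "\<rho> > 0" "\<forall>j\<in>-{i}. \<forall>x\<in>e j ` double_broom. dist x q \<ge> \<rho>"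
    using compact_Hd_closed_union[OF nq] by blast
  define \<rho>' where "\<rho>' = min \<rho> (min (norm q - 1) (dist q (m i)))"
  have r': "\<rho>' > 0" using r nq q by (simp add: \<rho>'_def)
  have "\<forall>x\<in>Hd. dist x q < \<rho>' \<longrightarrow> x \<in> e i ` double_broom \<and> x \<noteq> m i"
  proof (intro ballI impI)
    fix x assume x: "x \<in> Hd" "dist x q < \<rho>'"
    have "norm x > 1"
    proof -
      have "norm q \<le> norm x + dist x q" by (metis dist_norm norm_minus_commute norm_triangle_sub add.commute)
      then show ?thesis using x(2) by (simp add: \<rho>'_def)
    qed
    then have "x \<notin> cball 0 1" by simp
    then obtain j where j: "x \<in> e j ` double_broom" using x(1) unfolding Hd_eq by auto
    have "j = i" using r j x(2) by (metis ComplI min.strict_boundedE not_le singletonD \<rho>'_def)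
    moreover have "x \<noteq> m i" using x(2) by (auto simp: \<rho>'_def dist_commute)
    ultimately show "x \<in> e i ` double_broom \<and> x \<noteq> m i" using j by simp
  qed
  then show ?thesis using r' by blast
qed

end


definition axis :: "real set \<Rightarrow> (real \<times> real \<times> real) set" where
  "axis I = (\<lambda>x. (x, 0)) ` I"

definition gp :: "nat \<Rightarrow> real" where "gp k = 1 / (real k * (real k + 1))"

lemma gp_pos: "k \<ge> 1 \<Longrightarrow> gp k > 0" by (simp add: gp_def)

lemma gp_le: "k \<ge> 1 \<Longrightarrow> gp k \<le> 1/2"
proof -
  assume k: "k \<ge> 1"
  then have k1: "real k \<ge> 1" by simp
  have "1 * 2 \<le> real k * (real k + 1)" by (rule mult_mono) (use k1 in auto)
  then have "real k * (real k + 1) \<ge> 2" by simp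
  then show ?thesis by (simp add: gp_def field_simps)
qed

lemma g1: fixes a b :: real assumes "a \<ge> 1" "a + 1 \<le> b" shows "1/a - 1/b \<ge> 1/(b*(b+1))"
proof -
  have "b + 1 \<le> (b - a) * (b + 1)" using mult_right_mono[of 1 "b-a" "b+1"] assms by simp
  then have i: "a \<le> (b - a) * (b + 1)" using assms by linarith
  have eq: "1/a - 1/b = (b - a)/(a*b)" using assms by (simp add: field_simps)
  have "b * a \<le> b * ((b - a) * (b + 1))" using mult_left_mono[OF i, of b] assms by simp
  then have "a * b \<le> (b - a) * (b * (b + 1))" by (simp add: algebra_simps)
  then have "1/(b*(b+1)) \<le> (b - a)/(a*b)" using assms by (simp add: divide_simps)
  then show ?thesis using eq by simp
qed

lemma g2: fixes a b :: real assumes "b \<ge> 1" "b + 1 \<le> a" shows "1/b - 1/a \<ge> 1/(b*(b+1))"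
proof -
  have "b * (a - b - 1) \<ge> 0" using assms by simp
  then have i: "a \<le> (a - b) * (b + 1)" by (simp add: algebra_simps)
  have eq: "1/b - 1/a = (a - b)/(a*b)" using assms by (simp add: field_simps)
  have "b * a \<le> b * ((a - b) * (b + 1))" using mult_left_mono[OF i, of b] assms by simp
  then have "a * b \<le> (a - b) * (b * (b + 1))" by (simp add: algebra_simps)
  then have "1/(b*(b+1)) \<le> (a - b)/(a*b)" using assms by (simp add: divide_simps)
  then show ?thesis using eq by simp
qed

lemma gap:
  assumes j: "j \<ge> 1" and k: "k \<ge> 1" and jk: "j \<noteq> k"
  shows "\<bar>1 / real j - 1 / real k\<bar> \<ge> gp k"
proof (cases "j < k")
  case True
  then have "real j + 1 \<le> real k" by linarith
  then have "1/real j - 1/real k \<ge> gp k" using g1[of "real j" "real k"] j by (simp add: gp_def)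
  then show ?thesis by linarith
next
  case False
  then have "real k + 1 \<le> real j" using jk by linarith
  then have "1/real k - 1/real j \<ge> gp k" using g2[of "real k" "real j"] k by (simp add: gp_def)
  then show ?thesis by linarith
qed

lemma axis_seg: "closed_segment (a, 0::real\<times>real) (b, 0) = axis (closed_segment a b)"
  unfolding axis_def closed_segment_def by (auto simp: image_iff)

lemma closed_segment_real: "closed_segment (a::real) b = (if a \<le> b then {a..b} else {b..a})"
  by (rule closed_segment_eq_real_ivl)

lemma axis_union: "(\<Union>k\<in>{1::nat..}. closed_segment (cpt k) (cpt (k + 1))) = axis {-1..<0}"
proof -
  have seg: "closed_segment (cpt k) (cpt (k + 1)) = axis {-1 / real k..-1 / real (k+1)}" if k: "k \<ge> 1" for k
  proof -
    have "-1 / real k \<le> -1 / real (k+1)" using k by (simp add: field_simps)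
    then show ?thesis unfolding cpt_def using axis_seg[of "-1 / real k" "-1 / real (k+1)"]
      by (simp add: zero_prod_def closed_segment_real)
  qed
  have "(\<Union>k\<in>{1::nat..}. {-1 / real k..-1 / real (k+1)}) = {-1..<0}"
  proof (rule set_eqI, rule iffI)
    fix x assume "x \<in> (\<Union>k\<in>{1::nat..}. {-1 / real k..-1 / real (k+1)})"
    then obtain k where k: "k \<ge> 1" "-1 / real k \<le> x" "x \<le> -1 / real (k+1)" by auto
    have "-1 \<le> -1 / real k" using k by (simp add: field_simps)
    moreover have "-1 / real (k+1) < 0" by simp
    ultimately show "x \<in> {-1..<0}" using k(2,3) by (simp only: atLeastLessThan_iff) linarith
  next
    fix x :: real assume x: "x \<in> {-1..<0}"
    define y where "y = -1 / x"
    have y1: "y \<ge> 1" using x by (simp add: y_def field_simps)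
    define k where "k = nat \<lfloor>y\<rfloor>"
    have k1: "k \<ge> 1" using y1 by (simp add: k_def le_nat_iff)
    have ky: "real k \<le> y" "y < real k + 1" using y1 by (auto simp: k_def)
    have "-1 / real k \<le> x"
    proof -
      have "-1 / real k \<le> -1 / y" using ky k1 y1 by (simp add: field_simps)
      then show ?thesis using x by (simp add: y_def)
    qed
    moreover have "x \<le> -1 / real (k+1)"
    proof -
      have "-1 / y \<le> -1 / real (k+1)" using ky y1 by (simp add: field_simps)
      then show ?thesis using x by (simp add: y_def)
    qed
    ultimately show "x \<in> (\<Union>k\<in>{1::nat..}. {-1 / real k..-1 / real (k+1)})" using k1 by auto
  qed
  then show ?thesis using seg unfolding axis_def by (auto simp: image_UN[symmetric])
qed


context hd
begin

definition dH where "dH = diameter Hd"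
definition sc :: "nat \<Rightarrow> real" where "sc k = 1 / (real k * dH)"
definition cp :: "nat \<Rightarrow> real \<times> real \<Rightarrow> real \<times> real \<times> real" where "cp k p = (- 1 / real k, sc k *\<^sub>R p)"
definition EB :: "(real \<times> real \<times> real) set" where "EB = (\<lambda>p. (-2, p)) ` double_broom"
definition Ysp :: "real set \<Rightarrow> bool \<Rightarrow> (real \<times> real \<times> real) set" where
  "Ysp I \<beta> = (\<Union>k\<in>{1..}. cp k ` Hd) \<union> axis I \<union> (if \<beta> then EB else {})"

lemma dH_ge: "dH \<ge> 2" using diam_Hd by (simp add: dH_def)

lemma sc_pos: "k \<ge> 1 \<Longrightarrow> sc k > 0" using dH_ge by (simp add: sc_def)

lemma copyH_cp: "copyH Hd k = cp k"
  by (rule ext) (simp add: copyH_def cp_def sc_def dH_def Let_def prod_eq_iff)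

lemma cp_dist: "dist (cp k p) (cp k q) = sc k * dist p q" if "k \<ge> 1"
  using sc_pos[OF that] by (simp add: cp_def dist_Pair_Pair dist_norm scaleR_diff_right[symmetric])

lemma cp_inj: "k \<ge> 1 \<Longrightarrow> cp k p = cp k q \<Longrightarrow> p = q"
  using sc_pos[of k] by (simp add: cp_def)

lemma cp_seg: "closed_segment (cp k p) (cp k q) = cp k ` closed_segment p q"
proof -
  have "(1 - u) *\<^sub>R cp k p + u *\<^sub>R cp k q = cp k ((1 - u) *\<^sub>R p + u *\<^sub>R q)" for u
    by (simp add: cp_def algebra_simps add_divide_distrib[symmetric])
  then show ?thesis unfolding closed_segment_def by (auto simp: image_iff)
qed

lemma cp_cont: "continuous_on S (cp k)" unfolding cp_def by (intro continuous_intros)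

lemma fst_cp: "fst (cp k p) = - 1 / real k" by (simp add: cp_def)

lemma dist_fst: "dist q y \<ge> \<bar>fst q - fst y\<bar>"
  by (metis dist_fst_le dist_real_def)

lemma dist_snd: "dist q y \<ge> dist (snd q) (snd y)"
  by (rule dist_snd_le)

lemma Ysp_cases:
  assumes "y \<in> Ysp I \<beta>"
  obtains k p where "k \<ge> 1" "p \<in> Hd" "y = cp k p" | x where "x \<in> I" "y = (x, 0)"
    | q where "\<beta>" "q \<in> double_broom" "y = (-2, q)"
  using assms unfolding Ysp_def axis_def EB_def by (auto split: if_splits)

lemma near_plane:
  assumes k: "k \<ge> 1" and yf: "fst y = - 1 / real k" and q: "q \<in> Ysp I \<beta>" and d: "dist q y < gp k"
  shows "(\<exists>p\<in>Hd. q = cp k p) \<or> (\<exists>x\<in>I. q = (x, 0))"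
  using q
proof (cases rule: Ysp_cases)
  case (1 j p)
  show ?thesis
  proof (cases "j = k")
    case True then show ?thesis using 1 by blast
  next
    case False
    have "\<bar>fst q - fst y\<bar> = \<bar>1 / real k - 1 / real j\<bar>" using 1 yf by (simp add: fst_cp)
    also have "\<dots> = \<bar>1 / real j - 1 / real k\<bar>" by simp
    finally have "\<bar>fst q - fst y\<bar> \<ge> gp k" using gap[OF 1(1) k False] by simp
    then show ?thesis using d dist_fst[of q y] by linarith
  qed
next
  case (3 q')
  have "1 / real k \<le> 1" using k by simp
  then have "\<bar>fst q - fst y\<bar> \<ge> 1" using 3 yf by simp
  then show ?thesis using d dist_fst[of q y] gp_le[OF k] by linarith
qed auto


lemma cball_Hd: "cball 0 1 \<subseteq> Hd" unfolding Hd_eq by auto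

lemma cp_Ysp: "k \<ge> 1 \<Longrightarrow> p \<in> Hd \<Longrightarrow> cp k p \<in> Ysp I \<beta>"
  unfolding Ysp_def by auto

lemma axis_Ysp: "x \<in> I \<Longrightarrow> (x, 0) \<in> Ysp I \<beta>"
  unfolding Ysp_def axis_def by auto

lemma axis_seg_Ysp:
  assumes "convex I" "x \<in> I" "x' \<in> I"
  shows "closed_segment (x, 0) (x', 0) \<subseteq> Ysp I \<beta>"
proof -
  have "closed_segment x x' \<subseteq> I" using assms closed_segment_subset by blast
  then show ?thesis unfolding axis_seg Ysp_def axis_def by auto
qed

lemma cp0: "cp k 0 = (- 1 / real k, 0)" by (simp add: cp_def)

lemma LCMF_disk:
  assumes I: "convex I" "{-1..<0} \<subseteq> I" and k: "k \<ge> 1" and p: "norm p < 1"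
  shows "LCMF (Ysp I \<beta>) (cp k p) {}"
proof -
  define r where "r = min (gp k) (min (sc k * (1 - norm p)) (if p = 0 then 1 else sc k * norm p))"
  have r: "r > 0" using gp_pos[OF k] sc_pos[OF k] p by (simp add: r_def)
  define t :: "real \<times> real" where "t = (if p = 0 then (1/2, 0) else 0)"
  have tp: "t \<noteq> p" "norm t < 1" by (auto simp: t_def zero_prod_def)
  have pH: "p \<in> Hd" using p cball_Hd by auto
  have kI: "- 1 / real k \<in> I" using I(2) k by (auto simp: field_simps)
  have "LCMF (Ysp I \<beta>) (cp k p) (Ysp I \<beta> - ball (cp k p) r)"
  proof (rule fold_LCMF[OF r cp_Ysp[OF k pH], where w = "cp k t - cp k p"])
    show "closed_segment (cp k p) (cp k p + (cp k t - cp k p)) \<subseteq> Ysp I \<beta>"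
    proof -
      have "closed_segment p t \<subseteq> cball 0 1" using p tp by (intro closed_segment_subset) auto
      then show ?thesis using cball_Hd cp_Ysp[OF k] by (auto simp: cp_seg)
    qed
    show "cp k t - cp k p \<noteq> 0" using cp_inj[OF k, of t p] tp by auto
    fix q assume q: "q \<in> Ysp I \<beta>" "dist q (cp k p) < r"
    then have "dist q (cp k p) < gp k" by (simp add: r_def)
    from near_plane[OF k fst_cp q(1) this]
    show "closed_segment (cp k p) q \<subseteq> Ysp I \<beta>"
    proof (elim disjE bexE)
      fix p' assume p': "p' \<in> Hd" "q = cp k p'"
      have "sc k * dist p' p < sc k * (1 - norm p)" using q(2) p' cp_dist[OF k] by (simp add: r_def)
      then have "dist p' p < 1 - norm p" using sc_pos[OF k] by simp
      then have "norm p' < 1" using norm_triangle_sub[of p' p] by (simp add: dist_norm)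
      then have "closed_segment p p' \<subseteq> cball 0 1" using p by (intro closed_segment_subset) auto
      then show ?thesis using p' cball_Hd cp_Ysp[OF k] by (auto simp: cp_seg)
    next
      fix x assume x: "x \<in> I" "q = (x, 0)"
      show ?thesis
      proof (cases "p = 0")
        case True
        then show ?thesis using x axis_seg_Ysp[OF I(1) kI x(1)] by (simp add: cp0)
      next
        case False
        have "dist q (cp k p) \<ge> dist (snd q) (snd (cp k p))" by (rule dist_snd)
        also have "dist (snd q) (snd (cp k p)) = sc k * norm p" using x sc_pos[OF k] by (simp add: cp_def)
        finally show ?thesis using q(2) False by (simp add: r_def)
      qed
    qed
  qed
  then show ?thesis using LCMF_mono by blast
qed


definition PL :: "real set" where "PL = insert 0 (insert (-2) (range (\<lambda>j. - 1 / real (Suc j))))"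

lemma closed_PL: "closed PL"
proof -
  have "(\<lambda>j. - 1 / real (Suc j)) \<longlonglongrightarrow> - 0"
    using tendsto_minus[OF LIMSEQ_ignore_initial_segment[OF lim_const_over_n[of 1], of 1]] by simp
  then have "compact (insert 0 (range (\<lambda>j. - 1 / real (Suc j))))"
    using compact_sequence_with_limit by simp
  then have "compact (insert (-2) (insert 0 (range (\<lambda>j. - 1 / real (Suc j)))))" by simp
  then show ?thesis unfolding PL_def by (metis compact_imp_closed insert_commute)
qed

lemma plane_PL: "k \<ge> 1 \<Longrightarrow> - 1 / real k \<in> PL"
  unfolding PL_def by (rule insertI2, rule insertI2) (auto intro: image_eqI[of _ _ "k - 1"])

lemma LCMF_axis:
  assumes I: "convex I" "{-1..<0} \<subseteq> I" and x: "x0 \<in> I" "x0 \<notin> PL"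
  shows "LCMF (Ysp I \<beta>) (x0, 0) {}"
proof -
  obtain r where r: "r > 0" "\<forall>z\<in>PL. r \<le> dist x0 z" using separate_point_closed[OF closed_PL x(2)] by blast
  have m1I: "-1 \<in> I" using I(2) by auto
  have m1: "x0 \<noteq> -1" using x(2) plane_PL[of 1] by auto
  have "LCMF (Ysp I \<beta>) (x0, 0) (Ysp I \<beta> - ball (x0, 0) r)"
  proof (rule fold_LCMF[OF r(1) axis_Ysp[OF x(1)], where w = "(-1, 0) - (x0, 0)"])
    show "closed_segment (x0, 0) ((x0, 0) + ((-1, 0) - (x0, 0))) \<subseteq> Ysp I \<beta>"
      using axis_seg_Ysp[OF I(1) x(1) m1I] by simp
    show "(-1, 0) - (x0, 0) \<noteq> (0 :: real \<times> real \<times> real)" using m1 by (simp add: zero_prod_def)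
    fix q assume q: "q \<in> Ysp I \<beta>" "dist q (x0, 0) < r"
    from q(1) show "closed_segment (x0, 0) q \<subseteq> Ysp I \<beta>"
    proof (cases rule: Ysp_cases)
      case (1 k p)
      have "\<bar>fst q - x0\<bar> \<ge> r" using r(2) plane_PL[OF 1(1)] 1 by (force simp: fst_cp dist_real_def)
      then show ?thesis using q(2) dist_fst[of q "(x0, 0)"] by simp
    next
      case (2 x)
      then show ?thesis using axis_seg_Ysp[OF I(1) x(1)] by simp
    next
      case (3 q')
      have "\<bar>fst q - x0\<bar> \<ge> r" using r(2) 3 by (force simp: PL_def dist_real_def)
      then show ?thesis using q(2) dist_fst[of q "(x0, 0)"] by simp
    qed
  qed
  then show ?thesis using LCMF_mono by blast
qed


lemma eK_Hd: "e i ` double_broom \<subseteq> Hd" unfolding Hd_eq by auto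

lemma broom_emb_copy:
  assumes k: "k \<ge> 1"
  shows "broom_emb (\<lambda>q. cp k (e i q)) (Ysp I \<beta>)"
proof
  show "continuous_on double_broom (\<lambda>q. cp k (e i q))"
    by (rule continuous_on_compose2[OF cp_cont e_cont]) auto
  show "inj_on (\<lambda>q. cp k (e i q)) double_broom"
    using e_inj[of i] cp_inj[OF k] unfolding inj_on_def by blast
  show sub: "(\<lambda>q. cp k (e i q)) ` double_broom \<subseteq> Ysp I \<beta>"
    using eK_Hd cp_Ysp[OF k] by blast
  show "openin (top_of_set (Ysp I \<beta>)) ((\<lambda>q. cp k (e i q)) ` double_broom - {cp k (e i (0,0))})"
    unfolding openin_euclidean_subtopology_iff
  proof (intro conjI ballI)
    show "(\<lambda>q. cp k (e i q)) ` double_broom - {cp k (e i (0,0))} \<subseteq> Ysp I \<beta>" using sub by auto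
    fix z assume z: "z \<in> (\<lambda>q. cp k (e i q)) ` double_broom - {cp k (e i (0,0))}"
    then obtain q0 where q0: "q0 \<in> double_broom" "z = cp k (e i q0)" by auto
    define x0 where "x0 = e i q0"
    have x0: "x0 \<in> e i ` double_broom" "x0 \<noteq> m i" using q0 z e_v by (auto simp: x0_def)
    obtain \<rho> where \<rho>: "\<rho> > 0" "\<forall>x\<in>Hd. dist x x0 < \<rho> \<longrightarrow> x \<in> e i ` double_broom \<and> x \<noteq> m i"
      using Hd_local_broom[OF x0] by blast
    have nx0: "norm x0 \<ge> 1" using eK_norm_ge[OF x0(1)] .
    define \<epsilon> where "\<epsilon> = min (gp k) (min (sc k * \<rho>) (sc k))"
    have eps: "\<epsilon> > 0" using gp_pos[OF k] sc_pos[OF k] \<rho> by (simp add: \<epsilon>_def)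
    have "\<forall>x'\<in>Ysp I \<beta>. dist x' z < \<epsilon> \<longrightarrow> x' \<in> (\<lambda>q. cp k (e i q)) ` double_broom - {cp k (e i (0,0))}"
    proof (intro ballI impI)
      fix x' assume x': "x' \<in> Ysp I \<beta>" "dist x' z < \<epsilon>"
      then have "dist x' z < gp k" by (simp add: \<epsilon>_def)
      from near_plane[OF k _ x'(1) this] q0 fst_cp
      consider p' where "p' \<in> Hd" "x' = cp k p'" | x where "x \<in> I" "x' = (x, 0)" by (auto simp: x0_def)
      then show "x' \<in> (\<lambda>q. cp k (e i q)) ` double_broom - {cp k (e i (0,0))}"
      proof cases
        case 1
        have "sc k * dist p' x0 < sc k * \<rho>" using x'(2) 1 q0 cp_dist[OF k] by (simp add: \<epsilon>_def x0_def)
        then have "dist p' x0 < \<rho>" using sc_pos[OF k] by simp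
        then have "p' \<in> e i ` double_broom" "p' \<noteq> m i" using \<rho>(2) 1(1) by auto
        moreover have "x' \<noteq> cp k (e i (0,0))"
          using \<open>p' \<noteq> m i\<close> 1(2) e_v cp_inj[OF k, of p' "m i"] by auto
        ultimately show ?thesis using 1 by auto
      next
        case 2
        have "dist x' z \<ge> dist (snd x') (snd z)" by (rule dist_snd)
        also have "dist (snd x') (snd z) = sc k * norm x0" using 2 q0 sc_pos[OF k] by (simp add: cp_def x0_def)
        also have "sc k * norm x0 \<ge> sc k" using nx0 sc_pos[OF k] by simp
        finally show ?thesis using x'(2) by (simp add: \<epsilon>_def)
      qed
    qed
    then show "\<exists>\<epsilon>>0. \<forall>x'\<in>Ysp I \<beta>. dist x' z < \<epsilon> \<longrightarrow> x' \<in> (\<lambda>q. cp k (e i q)) ` double_broom - {cp k (e i (0,0))}"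
      using eps by blast
  qed
qed

lemma broom_emb_extra:
  assumes b: "\<beta>"
  shows "broom_emb (\<lambda>q. (-2::real, q)) (Ysp I \<beta>)"
proof
  show "continuous_on double_broom (\<lambda>q. (-2::real, q))" by (intro continuous_intros)
  show "inj_on (\<lambda>q. (-2::real, q)) double_broom" by (auto simp: inj_on_def)
  show sub: "(\<lambda>q. (-2::real, q)) ` double_broom \<subseteq> Ysp I \<beta>" using b by (auto simp: Ysp_def EB_def)
  show "openin (top_of_set (Ysp I \<beta>)) ((\<lambda>q. (-2::real, q)) ` double_broom - {(-2, (0,0))})"
    unfolding openin_euclidean_subtopology_iff
  proof (intro conjI ballI)
    show "(\<lambda>q. (-2::real, q)) ` double_broom - {(-2, (0,0))} \<subseteq> Ysp I \<beta>" using sub by auto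
    fix z assume z: "z \<in> (\<lambda>q. (-2::real, q)) ` double_broom - {(-2, (0,0))}"
    then obtain q0 where q0: "q0 \<in> double_broom" "z = (-2, q0)" "q0 \<noteq> (0,0)" by auto
    define \<epsilon> where "\<epsilon> = min 1 (norm q0)"
    have eps: "\<epsilon> > 0" using q0 by (simp add: \<epsilon>_def zero_prod_def)
    have "\<forall>x'\<in>Ysp I \<beta>. dist x' z < \<epsilon> \<longrightarrow> x' \<in> (\<lambda>q. (-2::real, q)) ` double_broom - {(-2, (0,0))}"
    proof (intro ballI impI)
      fix x' assume x': "x' \<in> Ysp I \<beta>" "dist x' z < \<epsilon>"
      from x'(1) show "x' \<in> (\<lambda>q. (-2::real, q)) ` double_broom - {(-2, (0,0))}"
      proof (cases rule: Ysp_cases)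
        case (1 j p)
        have h: "1 / real j \<le> 1" using 1 by simp
        have "fst x' - fst z = 2 - 1 / real j" using 1 q0 by (simp add: fst_cp)
        then have "\<bar>fst x' - fst z\<bar> \<ge> 1" using h by linarith
        then show ?thesis using x'(2) dist_fst[of x' z] by (simp add: \<epsilon>_def)
      next
        case (2 x)
        have "dist x' z \<ge> dist (snd x') (snd z)" by (rule dist_snd)
        then have "dist x' z \<ge> norm q0" using 2 q0 by (simp add: dist_norm)
        then show ?thesis using x'(2) by (simp add: \<epsilon>_def)
      next
        case (3 q')
        have "q' \<noteq> (0,0)"
        proof
          assume "q' = (0,0)"
          then have "dist x' z = norm q0" using 3 q0 by (simp add: dist_Pair_Pair dist_norm zero_prod_def[symmetric])
          then show False using x'(2) by (simp add: \<epsilon>_def)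
        qed
        then show ?thesis using 3 by auto
      qed
    qed
    then show "\<exists>\<epsilon>>0. \<forall>x'\<in>Ysp I \<beta>. dist x' z < \<epsilon> \<longrightarrow> x' \<in> (\<lambda>q. (-2::real, q)) ` double_broom - {(-2, (0,0))}"
      using eps by blast
  qed
qed

end


context hd
begin

definition CIRC :: "(real \<times> real \<times> real) set" where "CIRC = (\<Union>k\<in>{1..}. cp k ` sphere 0 1)"
definition bpt :: "real \<times> real \<times> real" where "bpt = (-2, 0)"

lemma Q1:
  assumes I: "convex I" "{-1..<0} \<subseteq> I" and y: "y \<in> Ysp I \<beta>"
  shows "y \<in> CIRC \<or> y = bpt \<or> y = 0 \<or> LCMF (Ysp I \<beta>) y {}"
  using y
proof (cases rule: Ysp_cases)
  case (1 k p)
  from 1(2) consider "norm p < 1" | "norm p = 1" | i where "p \<in> e i ` double_broom" "p \<noteq> m i"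
    unfolding Hd_eq by (force simp: norm_m)
  then show ?thesis
  proof cases
    case a: 1 then show ?thesis using LCMF_disk[OF I 1(1) a] 1 by simp
  next
    case 2
    then have "y \<in> cp k ` sphere 0 1" using 1 by auto
    then show ?thesis using 1(1) unfolding CIRC_def by blast
  next
    case (3 i)
    then obtain q where q0: "q \<in> double_broom" "p = e i q" by auto
    then have q: "q \<in> double_broom" "p = e i q" "q \<noteq> (0,0)" using 3(2) e_v by auto
    interpret B: broom_emb "\<lambda>q. cp k (e i q)" "Ysp I \<beta>" by (rule broom_emb_copy[OF 1(1)])
    show ?thesis using B.LCMF_broom[OF q(1,3)] 1 q by simp
  qed
next
  case (2 x)
  show ?thesis
  proof (cases "x \<in> PL")
    case False then show ?thesis using LCMF_axis[OF I 2(1) False] 2 by simp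
  next
    case True
    then consider "x = 0" | "x = -2" | j where "x = - 1 / real (Suc j)" unfolding PL_def by auto
    then show ?thesis
    proof cases
      case 1 then show ?thesis using 2 by (simp add: zero_prod_def)
    next
      case 2 then show ?thesis using \<open>y = (x, 0)\<close> by (simp add: bpt_def)
    next
      case (3 j)
      then have "y = cp (Suc j) 0" using 2 by (simp add: cp0)
      then show ?thesis using LCMF_disk[OF I, of "Suc j" 0] by simp
    qed
  qed
next
  case (3 q)
  show ?thesis
  proof (cases "q = (0,0)")
    case True then show ?thesis using 3 by (simp add: bpt_def zero_prod_def)
  next
    case False
    interpret B: broom_emb "\<lambda>q. (-2::real, q)" "Ysp I \<beta>" by (rule broom_emb_extra[OF 3(1)])
    show ?thesis using B.LCMF_broom[OF 3(2) False] 3 by simp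
  qed
qed

lemma circ_hf:
  assumes k: "k \<ge> 1" and p: "norm p = 1"
  shows "cp k p \<in> hf (Ysp I \<beta>)"
proof (rule hf_closure)
  have "p \<in> Hd" using cball_Hd p by auto
  then show "cp k p \<in> Ysp I \<beta>" using cp_Ysp[OF k] by blast
  show "range (\<lambda>i. cp k (m i)) \<subseteq> hf (Ysp I \<beta>)"
  proof (rule image_subsetI)
    fix i
    interpret B: broom_emb "\<lambda>q. cp k (e i q)" "Ysp I \<beta>" by (rule broom_emb_copy[OF k])
    show "cp k (m i) \<in> hf (Ysp I \<beta>)" using B.hf_center e_v by simp
  qed
  have "p \<in> closure (range m)" using m_dense p by auto
  moreover have "cp k ` closure (range m) \<subseteq> closure (range (\<lambda>i. cp k (m i)))"
    by (rule image_closure_subset[OF cp_cont]) (auto intro: closure_subset[THEN subsetD])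
  ultimately show "cp k p \<in> closure (range (\<lambda>i. cp k (m i)))" by auto
qed

lemma cp10_small: "k \<ge> 1 \<Longrightarrow> norm (cp k (1,0)) \<le> 2 / real k"
proof -
  assume k: "k \<ge> 1"
  have "norm (cp k (1,0)) \<le> norm (- 1 / real k) + norm (sc k *\<^sub>R (1::real, 0::real))"
    unfolding cp_def by (rule norm_Pair_le)
  also have "\<dots> = 1 / real k + sc k" using sc_pos[OF k] by simp
  also have "sc k \<le> 1 / real k" using dH_ge k by (simp add: sc_def field_simps)
  finally show ?thesis by simp
qed

lemma zero_limit:
  assumes "\<epsilon> > 0"
  shows "\<exists>k\<ge>1. norm (cp k (1,0)) < \<epsilon>"
proof -
  obtain k :: nat where k: "2 / \<epsilon> < real k" using reals_Archimedean2 by blast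
  then have k1: "k \<ge> 1" using assms by (cases k) (auto simp: field_simps)
  have "2 / real k < \<epsilon>" using k assms k1 by (simp add: field_simps)
  then show ?thesis using cp10_small[OF k1] k1 by (intro exI[of _ k]) auto
qed

lemma zero_hf:
  assumes "(0::real \<times> real \<times> real) \<in> Ysp I \<beta>"
  shows "0 \<in> hf (Ysp I \<beta>)"
proof (rule hf_closure[OF assms])
  show "{cp k (1,0) | k. k \<ge> 1} \<subseteq> hf (Ysp I \<beta>)" using circ_hf by auto
  show "0 \<in> closure {cp k (1,0) | k. k \<ge> 1}"
    unfolding closure_approachable
  proof (intro allI impI)
    fix \<epsilon> :: real assume "\<epsilon> > 0"
    then obtain k where "k \<ge> 1" "norm (cp k (1,0)) < \<epsilon>" using zero_limit by blast
    then have "cp k (1,0) \<in> {cp k (1,0) | k. k \<ge> 1}" "dist (cp k (1,0)) 0 < \<epsilon>" by auto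
    then show "\<exists>y\<in>{cp k (1,0) | k. k \<ge> 1}. dist y 0 < \<epsilon>" by blast
  qed
qed


lemma circ_limpt:
  assumes k: "k \<ge> 1" and p: "norm p = 1"
  shows "cp k p islimpt hf (Ysp I \<beta>)"
proof -
  have "connected (sphere (0::real \<times> real) 1)" by (rule connected_sphere) simp
  moreover have "sphere (0::real \<times> real) 1 \<noteq> {x}" for x
  proof
    assume "sphere (0::real \<times> real) 1 = {x}"
    moreover have "(1,0) \<in> sphere (0::real \<times> real) 1" "(-1,0) \<in> sphere (0::real \<times> real) 1"
      by (simp_all add: norm_Pair)
    ultimately have "(1::real,0::real) = x" "(-1::real,0::real) = x" by blast+
    then show False by (metis fst_conv one_neq_neg_one)
  qed
  ultimately have pl: "p islimpt sphere 0 1" using p by (intro connected_imp_perfect) auto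
  show ?thesis unfolding islimpt_def
  proof (intro allI impI)
    fix T assume T: "cp k p \<in> T" "open T"
    have "open (cp k -` T)" using T(2) cp_cont[of UNIV k] by (simp add: continuous_on_open_vimage)
    moreover have "p \<in> cp k -` T" using T(1) by simp
    ultimately obtain p' where p': "p' \<in> sphere 0 1" "p' \<in> cp k -` T" "p' \<noteq> p"
      using pl unfolding islimpt_def by blast
    have "cp k p' \<in> hf (Ysp I \<beta>)" using circ_hf[OF k] p' by simp
    moreover have "cp k p' \<noteq> cp k p" using cp_inj[OF k] p' by blast
    ultimately show "\<exists>y\<in>hf (Ysp I \<beta>). y \<in> T \<and> y \<noteq> cp k p" using p' by auto
  qed
qed

lemma zero_limpt:
  shows "(0::real \<times> real \<times> real) islimpt hf (Ysp I \<beta>)"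
  unfolding islimpt_def
proof (intro allI impI)
  fix T :: "(real \<times> real \<times> real) set" assume T: "0 \<in> T" "open T"
  then obtain \<epsilon> where eps: "\<epsilon> > 0" "ball 0 \<epsilon> \<subseteq> T" using open_contains_ball by blast
  obtain k where k: "k \<ge> 1" "norm (cp k (1,0)) < \<epsilon>" using zero_limit[OF eps(1)] by blast
  have "cp k (1,0) \<in> hf (Ysp I \<beta>)" using circ_hf[OF k(1)] by simp
  moreover have "cp k (1,0) \<in> T" using k eps by (auto simp: dist_norm)
  moreover have "cp k (1,0) \<noteq> 0" using k by (simp add: cp_def zero_prod_def)
  ultimately show "\<exists>y\<in>hf (Ysp I \<beta>). y \<in> T \<and> y \<noteq> 0" by blast
qed

lemma bpt_Ysp: "bpt \<in> Ysp I \<beta> \<Longrightarrow> (-2 \<in> I \<longleftrightarrow> \<beta>) \<Longrightarrow> \<beta>"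
proof -
  assume a: "bpt \<in> Ysp I \<beta>" and b: "-2 \<in> I \<longleftrightarrow> \<beta>"
  from a show ?thesis
  proof (cases rule: Ysp_cases)
    case (1 k p)
    then have "- 1 / real k = -2" by (simp add: bpt_def cp_def)
    moreover have "1 / real k \<le> 1" using 1 by simp
    ultimately show ?thesis by linarith
  next
    case (2 x) then show ?thesis using b by (simp add: bpt_def)
  qed auto
qed

lemma Ysp_conds:
  assumes I: "convex I" "{-1..<0} \<subseteq> I" and b: "-2 \<in> I \<longleftrightarrow> \<beta>"
  shows "\<forall>y\<in>Ysp I \<beta> - hf (Ysp I \<beta>). LC (Ysp I \<beta>) y"
    and "\<forall>y\<in>hf (Ysp I \<beta>) - {bpt}. y islimpt hf (Ysp I \<beta>)"
    and "bpt \<in> hf (Ysp I \<beta>) \<Longrightarrow> NC (Ysp I \<beta>) bpt"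
proof -
  have special: "y \<in> hf (Ysp I \<beta>)" if y: "y \<in> Ysp I \<beta>" "y \<in> CIRC \<or> y = bpt \<or> y = 0" for y
  proof -
    consider "y \<in> CIRC" | "y = bpt" | "y = 0" using y(2) by blast
    then show ?thesis
    proof cases
      case 1 then show ?thesis using circ_hf unfolding CIRC_def by auto
    next
      case 2
      then have \<beta> using bpt_Ysp b y(1) by blast
      interpret B: broom_emb "\<lambda>q. (-2::real, q)" "Ysp I \<beta>" by (rule broom_emb_extra[OF \<open>\<beta>\<close>])
      show ?thesis using B.hf_center 2 by (simp add: bpt_def zero_prod_def)
    next
      case 3 then show ?thesis using zero_hf y(1) by simp
    qed
  qed
  show "\<forall>y\<in>Ysp I \<beta> - hf (Ysp I \<beta>). LC (Ysp I \<beta>) y"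
  proof
    fix y assume y: "y \<in> Ysp I \<beta> - hf (Ysp I \<beta>)"
    then have "\<not> (y \<in> CIRC \<or> y = bpt \<or> y = 0)" using special by blast
    then show "LC (Ysp I \<beta>) y" using Q1[OF I, of y \<beta>] y LCMF_LC by blast
  qed
  show "\<forall>y\<in>hf (Ysp I \<beta>) - {bpt}. y islimpt hf (Ysp I \<beta>)"
  proof
    fix y assume y: "y \<in> hf (Ysp I \<beta>) - {bpt}"
    then have yY: "y \<in> Ysp I \<beta>" using hf_subset by blast
    have "\<not> LCMF (Ysp I \<beta>) y {}" using y LCMF_not_hf by blast
    then have "y \<in> CIRC \<or> y = 0" using Q1[OF I yY] y by blast
    then show "y islimpt hf (Ysp I \<beta>)" using circ_limpt zero_limpt unfolding CIRC_def by auto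
  qed
  assume "bpt \<in> hf (Ysp I \<beta>)"
  then have \<beta> using bpt_Ysp b hf_subset by blast
  interpret B: broom_emb "\<lambda>q. (-2::real, q)" "Ysp I \<beta>" by (rule broom_emb_extra[OF \<open>\<beta>\<close>])
  show "NC (Ysp I \<beta>) bpt" using B.NC_center by (simp add: bpt_def zero_prod_def)
qed


lemma WHo_Ysp: "WHo Hd = Ysp {-1..<0} False"
  unfolding WHo_def Ysp_def copyH_cp axis_union by simp

lemma axis_Un: "axis A \<union> axis B = axis (A \<union> B)" unfolding axis_def by auto

lemma WBHo_Ysp: "WBHo Hd = Ysp {-2..<0} True"
proof -
  have e1: "(\<lambda>p. (-2::real, fst p, snd p)) ` double_broom = EB" unfolding EB_def by simp
  have e2: "closed_segment (-2::real, 0::real, 0::real) (cpt 1) = axis {-2..-1}"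
    using axis_seg[of "-2" "-1"] by (simp add: cpt_def zero_prod_def closed_segment_real)
  have e3: "{-2..-1} \<union> {-1..<0} = {-2..<(0::real)}" by auto
  show ?thesis unfolding WBHo_def WHo_Ysp e1 e2 Ysp_def
    using axis_Un[of "{-2..-1}" "{-1..<0}"] e3 by auto
qed

lemma insert_axis: "insert (0::real \<times> real \<times> real) (axis {a..<0}) = axis {a..0}" if "a \<le> 0"
  using that unfolding axis_def by (auto simp: zero_prod_def)

lemma WH_Ysp: "WH Hd = Ysp {-1..0} False"
  unfolding WH_def WHo_Ysp Ysp_def using insert_axis[of "-1"] by auto

lemma WBH_Ysp: "WBH Hd = Ysp {-2..0} True"
  unfolding WBH_def WBHo_Ysp Ysp_def using insert_axis[of "-2"] by auto

lemma final_pair: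
  assumes IX: "convex IX" "{-1..<0} \<subseteq> IX" "-2 \<notin> IX"
    and IY: "convex IY" "{-1..<0} \<subseteq> IY" "-2 \<in> IY"
    and he: "homotopy_equivalence_pair (Ysp IX False) (Ysp IY True) f g"
  shows "f ` hf (Ysp IX False) \<subseteq> hf (Ysp IY True) \<and> g ` hf (Ysp IY True) \<subseteq> hf (Ysp IX False)"
proof (rule abstract_main[OF he, where b = bpt])
  have bX: "-2 \<in> IX \<longleftrightarrow> False" using IX by simp
  have bY: "-2 \<in> IY \<longleftrightarrow> True" using IY by simp
  note X = Ysp_conds[OF IX(1,2) bX] and Y = Ysp_conds[OF IY(1,2) bY]
  show "\<forall>x\<in>Ysp IX False - hf (Ysp IX False). LC (Ysp IX False) x" using X(1) .
  have "bpt \<notin> Ysp IX False" using bpt_Ysp bX by blast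
  then have "bpt \<notin> hf (Ysp IX False)" using hf_subset by blast
  then show "\<forall>x\<in>hf (Ysp IX False). x islimpt hf (Ysp IX False)" using X(2) by blast
  show "\<forall>y\<in>Ysp IY True - hf (Ysp IY True). LC (Ysp IY True) y" using Y(1) .
  show "\<forall>y\<in>hf (Ysp IY True) - {bpt}. y islimpt hf (Ysp IY True)" using Y(2) .
  show "bpt \<in> hf (Ysp IY True) \<Longrightarrow> NC (Ysp IY True) bpt" using Y(3) .
qed

end

theorem lemma3p7:
  fixes m :: "nat \<Rightarrow> real \<times> real" and e :: "nat \<Rightarrow> real \<times> real \<Rightarrow> real \<times> real"
  assumes "hairy_disk_data m e"
  shows "(\<forall>f g. homotopy_equivalence_pair (WHo (hairy_disk m e)) (WBHo (hairy_disk m e)) f g \<longrightarrow>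
            f ` hf (WHo (hairy_disk m e)) \<subseteq> hf (WBHo (hairy_disk m e)) \<and>
            g ` hf (WBHo (hairy_disk m e)) \<subseteq> hf (WHo (hairy_disk m e))) \<and>
         (\<forall>f g. homotopy_equivalence_pair (WH (hairy_disk m e)) (WBH (hairy_disk m e)) f g \<longrightarrow>
            f ` hf (WH (hairy_disk m e)) \<subseteq> hf (WBH (hairy_disk m e)) \<and>
            g ` hf (WBH (hairy_disk m e)) \<subseteq> hf (WH (hairy_disk m e)))"
proof -
  interpret hd m e by (rule hd.intro[OF assms])
  have H: "hairy_disk m e = Hd" by (simp add: Hd_def)
  have c: "convex {-1..<0::real}" "convex {-2..<0::real}" "convex {-1..0::real}" "convex {-2..0::real}"
    by (simp_all add: convex_real_interval)
  show ?thesis unfolding H WHo_Ysp WBHo_Ysp WH_Ysp WBH_Ysp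
  proof (intro conjI)
    have s: "{-1..<0::real} \<subseteq> {-2..<0}" "{-1..<0::real} \<subseteq> {-1..0}" "{-1..<0::real} \<subseteq> {-2..0}"
      "(-2::real) \<notin> {-1..<0}" "(-2::real) \<in> {-2..<0}" "(-2::real) \<notin> {-1..0}" "(-2::real) \<in> {-2..0}"
      by auto
    show "\<forall>f g. homotopy_equivalence_pair (Ysp {- 1..<0} False) (Ysp {- 2..<0} True) f g \<longrightarrow>
        f ` hf (Ysp {- 1..<0} False) \<subseteq> hf (Ysp {- 2..<0} True) \<and>
        g ` hf (Ysp {- 2..<0} True) \<subseteq> hf (Ysp {- 1..<0} False)"
      using final_pair[OF c(1) order_refl s(4) c(2) s(1) s(5)] by blast
    show "\<forall>f g. homotopy_equivalence_pair (Ysp {- 1..0} False) (Ysp {- 2..0} True) f g \<longrightarrow>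
        f ` hf (Ysp {- 1..0} False) \<subseteq> hf (Ysp {- 2..0} True) \<and>
        g ` hf (Ysp {- 2..0} True) \<subseteq> hf (Ysp {- 1..0} False)"
      using final_pair[OF c(3) s(2) s(6) c(4) s(3) s(7)] by blast
  qed
qed


end
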